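(* (Interval Stabilization) Let $X$ be an extensible marked Dynkin diagram and let $\lambda_1,\lambda_2\in\mathcal H_2^+$ with $\lambda_1\ge\lambda_2$. Let $I(\lambda_1,\lambda_2)=\{\gamma\in\mathcal H_2^+:\lambda_1\ge\gamma\ge\lambda_2\}$ and, for $n$ larger than the lengths of $\lambda_1$ and $\lambda_2$, let $I^{(n)}(\lambda_1,\lambda_2)=\{\beta\in P^+(X_n):\lambda_1^{(n)}\ge\beta\ge\lambda_2^{(n)}\}$. Then: (1) $I(\lambda_1,\lambda_2)$ is a finite set; (2) there exists $N$ such that for all $n\ge N$, $I^{(n)}(\lambda_1,\lambda_2)=\{\gamma^{(n)}:\gamma\in I(\lambda_1,\lambda_2)\}$.
   Context: Marked Dynkin diagram $X$: nodes $1,\dots,d$, node $d$ distinguished, symmetrizable generalized Cartan matrix $C(X)$. For $n\ge d$, $X_n$ is obtained by attaching a simply-laced chain of new nodes $d+1,\dots,n$ to node $d$ ($C(X_n)$ has $C(X)$ as upper-left block, $2$ on the remaining diagonal, $-1$ at $(i,i+1),(i+1,i)$ for $d\le i<n$, $0$ elsewhere); $X_{d-1}$ is $X$ with node $d$ deleted; $\det(Y)$ is the determinant of the Cartan matrix of $Y$; $\Delta$ is the common difference of the arithmetic progression $\det(X_n)$, $n\ge d$; $X$ is extensible if $\Delta\ne0$, $\det X\ne0$, $\gcd(\Delta,\det X)=1$. $\mathfrak g(X_n)$: simple roots $\alpha_i^{(n)}$, coroots $\check\alpha_i^{(n)}$, fundamental weights $\omega_i^{(n)}$, $\overline{\omega}_i^{(n)}=\omega_{n-i+1}^{(n)}$,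 $Q^+(X_n)=\bigoplus\mathbb Z_{\ge0}\alpha_i^{(n)}$, dominant weights $P^+(X_n)=\{\beta:\beta(\check\alpha_i^{(n)})\in\mathbb Z_{\ge0}\ \forall i\}$; on $\mathfrak h^*(X_n)$, $\beta\ge\beta'$ means $\beta-\beta'\in Q^+(X_n)$. $\mathcal H_1$: finitely supported integer sequences ($\mathcal H_1^+$: nonnegative), $\ell(x)=\max\{i:x_i\ne0\}$, $\mathcal H_2=\mathcal H_1^2$, $\mathcal H_2^+=(\mathcal H_1^+)^2$; for $\lambda=(x,y)$, length $\ell(\lambda,X)=\ell(y)+\max(d,\ell(x))$, and $\lambda^{(n)}=\sum x_i\omega_i^{(n)}+\sum y_i\overline{\omega}_i^{(n)}$ for $n\ge\ell(\lambda,X)$. $a_i=\det(X)(C(X)^{-1})_{d\,i}$ ($i\le d$), $a_i=\det(X_{i-1})$ ($i>d$); $|\lambda|_X=\sum a_ix_i-\Delta\sum i\,y_i$. Partial order on $\mathcal H_2$: $\lambda_1\ge\lambda_2$ iff $|\lambda_1|_X=|\lambda_2|_X$ and $\lambda_1^{(n)}-\lambda_2^{(n)}\in Q^+(X_n)$ for all sufficiently large $n$. *)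

theory Defs
  imports Complex_Main "HOL-Combinatorics.Permutations"
begin

text \<open>Matrices are functions nat => nat => int, indices 1..n.
  A marked Dynkin diagram X is given by (d, C), where C restricted to {1..d}x{1..d}
  is its Cartan matrix; node d is the distinguished node.\<close>

definition detn :: "nat \<Rightarrow> (nat \<Rightarrow> nat \<Rightarrow> int) \<Rightarrow> int" where
  "detn n A = (\<Sum>p\<in>{p. p permutes {1..n}}. sign p * (\<Prod>i\<in>{1..n}. A i (p i)))"

definition gcm :: "nat \<Rightarrow> (nat \<Rightarrow> nat \<Rightarrow> int) \<Rightarrow> bool" where
  "gcm d C \<longleftrightarrow> (\<forall>i\<in>{1..d}. C i i = 2)
     \<and> (\<forall>i\<in>{1..d}. \<forall>j\<in>{1..d}. i \<noteq> j \<longrightarrow> C i j \<le> 0)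
     \<and> (\<forall>i\<in>{1..d}. \<forall>j\<in>{1..d}. C i j = 0 \<longleftrightarrow> C j i = 0)"

definition symmetrizable :: "nat \<Rightarrow> (nat \<Rightarrow> nat \<Rightarrow> int) \<Rightarrow> bool" where
  "symmetrizable d C \<longleftrightarrow> (\<exists>e :: nat \<Rightarrow> rat. (\<forall>i\<in>{1..d}. e i > 0)
     \<and> (\<forall>i\<in>{1..d}. \<forall>j\<in>{1..d}. e i * of_int (C i j) = e j * of_int (C j i)))"

text \<open>Cartan matrix of X_n (chain d+1..n attached to node d).\<close>
definition cartan_ext :: "nat \<Rightarrow> (nat \<Rightarrow> nat \<Rightarrow> int) \<Rightarrow> nat \<Rightarrow> nat \<Rightarrow> int" where
  "cartan_ext d C i j =
     (if i \<le> d \<and> j \<le> d then C i j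
      else if i = j then 2
      else if (j = i + 1 \<or> i = j + 1) \<and> d \<le> min i j then -1
      else 0)"

text \<open>det(X_n), meaningful for n >= d-1 (n = d-1 gives X with node d deleted).\<close>
definition Xdet :: "nat \<Rightarrow> (nat \<Rightarrow> nat \<Rightarrow> int) \<Rightarrow> nat \<Rightarrow> int" where
  "Xdet d C n = detn n (cartan_ext d C)"

definition Delta :: "nat \<Rightarrow> (nat \<Rightarrow> nat \<Rightarrow> int) \<Rightarrow> int" where
  "Delta d C = Xdet d C (d + 1) - Xdet d C d"

definition extensible :: "nat \<Rightarrow> (nat \<Rightarrow> nat \<Rightarrow> int) \<Rightarrow> bool" where
  "extensible d C \<longleftrightarrow> Delta d C \<noteq> 0 \<and> Xdet d C d \<noteq> 0 \<and> gcd (Delta d C) (Xdet d C d) = 1"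

definition skip :: "nat \<Rightarrow> nat \<Rightarrow> nat" where
  "skip r i = (if i < r then i else i + 1)"

definition adjugate :: "nat \<Rightarrow> (nat \<Rightarrow> nat \<Rightarrow> int) \<Rightarrow> nat \<Rightarrow> nat \<Rightarrow> int" where
  "adjugate n A r c = (-1) ^ (r + c) * detn (n - 1) (\<lambda>i j. A (skip c i) (skip r j))"

text \<open>a_i = det(X) (C(X)^{-1})_{d i} = adj(C(X))_{d i} for i <= d; a_i = det(X_{i-1}) for i > d.\<close>
definition acoef :: "nat \<Rightarrow> (nat \<Rightarrow> nat \<Rightarrow> int) \<Rightarrow> nat \<Rightarrow> int" where
  "acoef d C i = (if i \<le> d then adjugate d C d i else Xdet d C (i - 1))"

text \<open>H_1: finitely supported integer sequences x_1, x_2, ... (index 0 unused, set to 0).\<close>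
definition H1 :: "(nat \<Rightarrow> int) set" where
  "H1 = {x. finite {i. x i \<noteq> 0} \<and> x 0 = 0}"

definition H1p :: "(nat \<Rightarrow> int) set" where
  "H1p = {x \<in> H1. \<forall>i. x i \<ge> 0}"

definition H2 :: "((nat \<Rightarrow> int) \<times> (nat \<Rightarrow> int)) set" where
  "H2 = H1 \<times> H1"

definition H2p :: "((nat \<Rightarrow> int) \<times> (nat \<Rightarrow> int)) set" where
  "H2p = H1p \<times> H1p"

definition seqlen :: "(nat \<Rightarrow> int) \<Rightarrow> nat" where
  "seqlen x = (if \<exists>i. x i \<noteq> 0 then Max {i. x i \<noteq> 0} else 0)"

definition hlen :: "nat \<Rightarrow> (nat \<Rightarrow> int) \<times> (nat \<Rightarrow> int) \<Rightarrow> nat" where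
  "hlen d lam = seqlen (snd lam) + max d (seqlen (fst lam))"

definition hnorm :: "nat \<Rightarrow> (nat \<Rightarrow> nat \<Rightarrow> int) \<Rightarrow> (nat \<Rightarrow> int) \<times> (nat \<Rightarrow> int) \<Rightarrow> int" where
  "hnorm d C lam = (\<Sum>i\<in>{1..seqlen (fst lam)}. acoef d C i * fst lam i)
       - Delta d C * (\<Sum>i\<in>{1..seqlen (snd lam)}. int i * snd lam i)"

text \<open>Weights of g(X_n) are represented by their values on the simple coroots:
  beta is encoded as the vector (beta(coroot_i))_{i=1..n} (zero outside 1..n).
  Convention (Kac): alpha_j(coroot_i) = C(X_n)_{ij}.
  lambda^(n) = sum x_i omega_i + sum y_i omega_{n-i+1}.\<close>
definition wt :: "nat \<Rightarrow> (nat \<Rightarrow> int) \<times> (nat \<Rightarrow> int) \<Rightarrow> nat \<Rightarrow> int" where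
  "wt n lam i = (if 1 \<le> i \<and> i \<le> n then fst lam i + snd lam (n + 1 - i) else 0)"

definition dominant :: "nat \<Rightarrow> (nat \<Rightarrow> int) \<Rightarrow> bool" where
  "dominant n b \<longleftrightarrow> (\<forall>i\<in>{1..n}. b i \<ge> 0) \<and> (\<forall>i. i \<notin> {1..n} \<longrightarrow> b i = 0)"

text \<open>beta >= beta' in h^*(X_n): beta - beta' is a nonnegative integer combination of simple roots.\<close>
definition Qge :: "nat \<Rightarrow> (nat \<Rightarrow> nat \<Rightarrow> int) \<Rightarrow> nat \<Rightarrow> (nat \<Rightarrow> int) \<Rightarrow> (nat \<Rightarrow> int) \<Rightarrow> bool" where
  "Qge d C n b b' \<longleftrightarrow> (\<exists>c :: nat \<Rightarrow> nat. \<forall>i\<in>{1..n}.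
      b i - b' i = (\<Sum>j\<in>{1..n}. cartan_ext d C i j * int (c j)))"

definition Hge :: "nat \<Rightarrow> (nat \<Rightarrow> nat \<Rightarrow> int) \<Rightarrow> (nat \<Rightarrow> int) \<times> (nat \<Rightarrow> int)
    \<Rightarrow> (nat \<Rightarrow> int) \<times> (nat \<Rightarrow> int) \<Rightarrow> bool" where
  "Hge d C lam1 lam2 \<longleftrightarrow> hnorm d C lam1 = hnorm d C lam2
     \<and> (\<exists>N. \<forall>n\<ge>N. Qge d C n (wt n lam1) (wt n lam2))"

definition Ival :: "nat \<Rightarrow> (nat \<Rightarrow> nat \<Rightarrow> int) \<Rightarrow> (nat \<Rightarrow> int) \<times> (nat \<Rightarrow> int)
    \<Rightarrow> (nat \<Rightarrow> int) \<times> (nat \<Rightarrow> int) \<Rightarrow> ((nat \<Rightarrow> int) \<times> (nat \<Rightarrow> int)) set" where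
  "Ival d C lam1 lam2 = {g \<in> H2p. Hge d C lam1 g \<and> Hge d C g lam2}"

definition Ivaln :: "nat \<Rightarrow> (nat \<Rightarrow> nat \<Rightarrow> int) \<Rightarrow> nat \<Rightarrow> (nat \<Rightarrow> int) \<times> (nat \<Rightarrow> int)
    \<Rightarrow> (nat \<Rightarrow> int) \<times> (nat \<Rightarrow> int) \<Rightarrow> (nat \<Rightarrow> int) set" where
  "Ivaln d C n lam1 lam2 = {b. dominant n b \<and> Qge d C n (wt n lam1) b \<and> Qge d C n b (wt n lam2)}"

end

theory Submission
  imports Defs "Jordan_Normal_Form.Determinant"
begin

definition Mx :: "nat \<Rightarrow> (nat \<Rightarrow> nat \<Rightarrow> int) \<Rightarrow> int mat" where
  "Mx n A = mat n n (\<lambda>(i,j). A (Suc i) (Suc j))"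

definition Bx :: "nat \<Rightarrow> (nat \<Rightarrow> nat \<Rightarrow> int) \<Rightarrow> int mat" where
  "Bx n A = mat (Suc n) (Suc n) (\<lambda>(i,j). if i = 0 \<and> j = 0 then 1 else if i = 0 \<or> j = 0 then 0 else A i j)"

lemma permutes_fix0:
  assumes "p permutes {0..<Suc n}" "p 0 = 0"
  shows "p permutes {1..n}"
  using assms unfolding permutes_def
  by (metis One_nat_def atLeastLessThanSuc_atLeastAtMost atLeastAtMost_iff le_zero_eq not_less_eq_eq)

lemma permutes_ext0:
  assumes "p permutes {1..n}"
  shows "p permutes {0..<Suc n}"
  using assms by (rule permutes_subset) auto

lemma detn_Bx: "detn n A = det (Bx n A)"
proof -
  let ?S = "{p. p permutes {0..<Suc n}}"
  let ?T = "{p. p permutes {1..n}}"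
  let ?f = "\<lambda>p. signof p * (\<Prod>i = 0..<Suc n. Bx n A $$ (i, p i))"
  have TS: "?T \<subseteq> ?S" using permutes_ext0 by blast
  have fin: "finite ?S" by (simp add: finite_permutations)
  have z: "?f p = 0" if "p \<in> ?S - ?T" for p
  proof -
    from that have p: "p permutes {0..<Suc n}" and np: "\<not> p permutes {1..n}" by auto
    have "p 0 \<noteq> 0" using permutes_fix0[OF p] np by blast
    moreover have "p 0 < Suc n" using permutes_in_image[OF p, of 0] by auto
    ultimately have "Bx n A $$ (0, p 0) = 0" unfolding Bx_def by auto
    hence "(\<Prod>i = 0..<Suc n. Bx n A $$ (i, p i)) = 0"
      by (intro prod_zero) auto
    thus ?thesis by simp
  qed
  have "det (Bx n A) = sum ?f ?S" unfolding det_def Bx_def by simp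
  also have "\<dots> = sum ?f ?T"
    by (rule sum.mono_neutral_right[OF fin TS]) (use z in blast)
  also have "\<dots> = (\<Sum>p\<in>?T. sign p * (\<Prod>i\<in>{1..n}. A i (p i)))"
  proof (rule sum.cong[OF refl])
    fix p assume "p \<in> ?T"
    hence p: "p permutes {1..n}" by auto
    have "{0..<Suc n} = insert 0 {1..n}" by auto
    hence "(\<Prod>i = 0..<Suc n. Bx n A $$ (i, p i)) = Bx n A $$ (0, p 0) * (\<Prod>i\<in>{1..n}. Bx n A $$ (i, p i))"
      by simp
    also have "Bx n A $$ (0, p 0) = 1"
      using permutes_not_in[OF p, of 0] unfolding Bx_def by auto
    also have "(\<Prod>i\<in>{1..n}. Bx n A $$ (i, p i)) = (\<Prod>i\<in>{1..n}. A i (p i))"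
    proof (rule prod.cong[OF refl])
      fix i assume i: "i \<in> {1..n}"
      hence "p i \<in> {1..n}" using permutes_in_image[OF p] by auto
      thus "Bx n A $$ (i, p i) = A i (p i)" using i unfolding Bx_def by auto
    qed
    finally show "?f p = sign p * (\<Prod>i\<in>{1..n}. A i (p i))" by simp
  qed
  finally show ?thesis unfolding detn_def by simp
qed

lemma det_Bx_Mx: "det (Bx n A) = det (Mx n A)"
proof -
  have B: "Bx n A \<in> carrier_mat (Suc n) (Suc n)" unfolding Bx_def by simp
  have "det (Bx n A) = (\<Sum>j<Suc n. Bx n A $$ (0,j) * cofactor (Bx n A) 0 j)"
    by (rule laplace_expansion_row[OF B]) simp
  also have "\<dots> = (\<Sum>j\<in>{0}. Bx n A $$ (0,j) * cofactor (Bx n A) 0 j)"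
    by (rule sum.mono_neutral_right) (auto simp: Bx_def)
  also have "\<dots> = cofactor (Bx n A) 0 0" by (simp add: Bx_def)
  also have "mat_delete (Bx n A) 0 0 = Mx n A"
    by (rule eq_matI) (auto simp: mat_delete_def Bx_def Mx_def)
  hence "cofactor (Bx n A) 0 0 = det (Mx n A)" by (simp add: cofactor_def)
  finally show ?thesis .
qed

lemma detn_Mx: "detn n A = det (Mx n A)"
  using detn_Bx det_Bx_Mx by simp

lemma detn_cong: "(\<And>i j. i \<in> {1..n} \<Longrightarrow> j \<in> {1..n} \<Longrightarrow> A i j = B i j) \<Longrightarrow> detn n A = detn n B"
  unfolding detn_Mx by (rule arg_cong[where f=det]) (auto simp: Mx_def)

lemma adjugate_Mx:
  assumes "r \<in> {1..n}" "c \<in> {1..n}"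
  shows "adjugate n A r c = adj_mat (Mx n A) $$ (r - 1, c - 1)"
proof -
  have "mat_delete (Mx n A) (c - 1) (r - 1) = Mx (n - 1) (\<lambda>i j. A (skip c i) (skip r j))"
    by (rule eq_matI) (use assms in \<open>auto simp: mat_delete_def Mx_def skip_def\<close>)
  moreover have "(-1::int) ^ (r + c) = (-1) ^ ((c - 1) + (r - 1))"
  proof -
    have "r + c = ((c - 1) + (r - 1)) + 2" using assms by auto
    thus ?thesis by (simp add: power_add)
  qed
  ultimately show ?thesis using assms
    unfolding adjugate_def adj_mat_def cofactor_def detn_Mx by (auto simp: Mx_def)
qed

lemma adj_identity:
  assumes k: "k \<in> {1..n}" and j: "j \<in> {1..n}"
  shows "(\<Sum>i\<in>{1..n}. adjugate n A k i * A i j) = (if k = j then detn n A else 0)"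
proof -
  have M: "Mx n A \<in> carrier_mat n n" by (simp add: Mx_def)
  have e: "adj_mat (Mx n A) * Mx n A = det (Mx n A) \<cdot>\<^sub>m 1\<^sub>m n" using adj_mat(3)[OF M] .
  have "(adj_mat (Mx n A) * Mx n A) $$ (k - 1, j - 1) = (if k = j then det (Mx n A) else 0)"
    unfolding e using k j by auto
  moreover have "(adj_mat (Mx n A) * Mx n A) $$ (k - 1, j - 1)
      = (\<Sum>i<n. adj_mat (Mx n A) $$ (k - 1, i) * Mx n A $$ (i, j - 1))"
    using k j adj_mat(1)[OF M] M by (auto simp: scalar_prod_def times_mat_def atLeast0LessThan)
  moreover have "\<dots> = (\<Sum>i\<in>{1..n}. adjugate n A k i * A i j)"
  proof -
    have "(\<Sum>i\<in>{1..n}. adjugate n A k i * A i j) = (\<Sum>i<n. adjugate n A k (Suc i) * A (Suc i) j)"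
      by (rule sum.reindex_bij_witness[of _ Suc "\<lambda>i. i - 1"]) auto
    also have "\<dots> = (\<Sum>i<n. adj_mat (Mx n A) $$ (k - 1, i) * Mx n A $$ (i, j - 1))"
      by (rule sum.cong[OF refl]) (use k j in \<open>auto simp: adjugate_Mx Mx_def\<close>)
    finally show ?thesis by simp
  qed
  ultimately show ?thesis by (cases "k = j") (simp_all add: detn_Mx)
qed

lemma ce_diag: "d < i \<Longrightarrow> cartan_ext d C i i = 2"
  by (simp add: cartan_ext_def)
lemma ce_adj1: "d \<le> i \<Longrightarrow> cartan_ext d C (Suc i) i = -1"
  by (simp add: cartan_ext_def)
lemma ce_adj2: "d \<le> i \<Longrightarrow> cartan_ext d C i (Suc i) = -1"
  by (simp add: cartan_ext_def)
lemma ce_zero: "(d < i \<or> d < j) \<Longrightarrow> i \<noteq> j \<Longrightarrow> j \<noteq> Suc i \<Longrightarrow> i \<noteq> Suc j \<Longrightarrow> cartan_ext d C i j = 0"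
  by (auto simp: cartan_ext_def)

lemma Xdet_rec:
  assumes dk: "d \<le> Suc k"
  shows "Xdet d C (Suc (Suc k)) = 2 * Xdet d C (Suc k) - Xdet d C k"
proof -
  let ?A = "cartan_ext d C"
  let ?n = "Suc (Suc k)"
  let ?M = "Mx ?n ?A"
  have M: "?M \<in> carrier_mat ?n ?n" by (simp add: Mx_def)
  have Me: "?M $$ (i, j) = ?A (Suc i) (Suc j)" if "i < ?n" "j < ?n" for i j
    using that by (simp add: Mx_def)
  have "det ?M = (\<Sum>j<?n. ?M $$ (Suc k, j) * cofactor ?M (Suc k) j)"
    by (rule laplace_expansion_row[OF M]) simp
  also have "\<dots> = (\<Sum>j\<in>{k, Suc k}. ?M $$ (Suc k, j) * cofactor ?M (Suc k) j)"
  proof (rule sum.mono_neutral_right)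
    show "\<forall>j\<in>{..<?n} - {k, Suc k}. ?M $$ (Suc k, j) * cofactor ?M (Suc k) j = 0"
    proof
      fix j assume j: "j \<in> {..<?n} - {k, Suc k}"
      hence "?M $$ (Suc k, j) = ?A (Suc (Suc k)) (Suc j)" using Me by simp
      also have "\<dots> = 0" using j dk by (intro ce_zero) auto
      finally show "?M $$ (Suc k, j) * cofactor ?M (Suc k) j = 0" by simp
    qed
  qed auto
  also have "\<dots> = ?M $$ (Suc k, k) * cofactor ?M (Suc k) k + ?M $$ (Suc k, Suc k) * cofactor ?M (Suc k) (Suc k)"
    by simp
  also have "?M $$ (Suc k, k) = -1" using Me[of "Suc k" k] ce_adj1[of d "Suc k" C] dk by simp
  also have "?M $$ (Suc k, Suc k) = 2" using Me[of "Suc k" "Suc k"] ce_diag[of d "Suc (Suc k)" C] dk by simp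
  also have "cofactor ?M (Suc k) (Suc k) = Xdet d C (Suc k)"
  proof -
    have "mat_delete ?M (Suc k) (Suc k) = Mx (Suc k) ?A"
      by (rule eq_matI) (auto simp: mat_delete_def Mx_def)
    thus ?thesis by (simp add: cofactor_def Xdet_def detn_Mx)
  qed
  also have "cofactor ?M (Suc k) k = Xdet d C k"
  proof -
    let ?M' = "mat_delete ?M (Suc k) k"
    have M': "?M' \<in> carrier_mat (Suc k) (Suc k)" unfolding carrier_mat_def by (simp add: Mx_def)
    have Me': "?M' $$ (i, k) = ?A (Suc i) (Suc (Suc k))" if "i < Suc k" for i
      using that by (simp add: Mx_def mat_delete_def)
    have "det ?M' = (\<Sum>i<Suc k. ?M' $$ (i, k) * cofactor ?M' i k)"
      by (rule laplace_expansion_column[OF M']) simp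
    also have "\<dots> = (\<Sum>i\<in>{k}. ?M' $$ (i, k) * cofactor ?M' i k)"
    proof (rule sum.mono_neutral_right)
      show "\<forall>i\<in>{..<Suc k} - {k}. ?M' $$ (i, k) * cofactor ?M' i k = 0"
      proof
        fix i assume i: "i \<in> {..<Suc k} - {k}"
        hence "?M' $$ (i, k) = ?A (Suc i) (Suc (Suc k))" using Me' by simp
        also have "\<dots> = 0" using i dk by (intro ce_zero) auto
        finally show "?M' $$ (i, k) * cofactor ?M' i k = 0" by simp
      qed
    qed auto
    also have "\<dots> = - cofactor ?M' k k"
      using Me'[of k] ce_adj2[of d "Suc k" C] dk by simp
    also have "mat_delete ?M' k k = Mx k ?A"
      by (rule eq_matI) (auto simp: mat_delete_def Mx_def)
    hence "cofactor ?M' k k = Xdet d C k" by (simp add: cofactor_def Xdet_def detn_Mx)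
    finally have "det ?M' = - Xdet d C k" .
    moreover have "(-1::int) ^ (Suc k + k) = -1" by (simp add: power_add)
    ultimately show ?thesis by (simp add: cofactor_def)
  qed
  finally show ?thesis by (simp add: Xdet_def detn_Mx)
qed

definition Cc :: "nat \<Rightarrow> (nat \<Rightarrow> nat \<Rightarrow> int) \<Rightarrow> nat \<Rightarrow> (nat \<Rightarrow> int) \<Rightarrow> nat \<Rightarrow> int" where
  "Cc d C n c i = (\<Sum>j\<in>{1..n}. cartan_ext d C i j * c j)"

lemma Qge_Cc: "Qge d C n b b' \<longleftrightarrow> (\<exists>c :: nat \<Rightarrow> nat. \<forall>i\<in>{1..n}. b i - b' i = Cc d C n (\<lambda>j. int (c j)) i)"
  unfolding Qge_def Cc_def by simp

lemma sum_single:
  assumes "finite A" "a \<in> A" "\<And>i. i \<in> A \<Longrightarrow> i \<noteq> a \<Longrightarrow> f i = 0"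
  shows "sum f A = f a"
proof -
  have "sum f A = sum f {a}"
    by (rule sum.mono_neutral_right) (use assms in auto)
  thus ?thesis by simp
qed

lemma Cc_Suc: "Cc d C (Suc n) c i = Cc d C n c i + cartan_ext d C i (Suc n) * c (Suc n)"
  unfolding Cc_def by (simp add: sum.cl_ivl_Suc)

lemma Cc_add: "Cc d C n (\<lambda>j. f j + g j) i = Cc d C n f i + Cc d C n g i"
  unfolding Cc_def by (simp add: distrib_left sum.distrib)

lemma Cc_diff: "Cc d C n (\<lambda>j. f j - g j) i = Cc d C n f i - Cc d C n g i"
  unfolding Cc_def by (simp add: right_diff_distrib sum_subtractf)

lemma Cc_cong: "(\<And>j. j \<in> {1..n} \<Longrightarrow> f j = g j) \<Longrightarrow> Cc d C n f i = Cc d C n g i"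
  unfolding Cc_def by simp

lemma Cc_row_mid:
  assumes "d < i" "1 \<le> d" "i < n"
  shows "Cc d C n c i = 2 * c i - c (i - 1) - c (i + 1)"
proof -
  obtain k where k: "i = Suc k" "d \<le> k" using assms by (cases i) auto
  have "Cc d C n c i = (\<Sum>j\<in>{k, Suc k, Suc (Suc k)}. cartan_ext d C i j * c j)"
    unfolding Cc_def
  proof (rule sum.mono_neutral_right)
    show "\<forall>j\<in>{1..n} - {k, Suc k, Suc (Suc k)}. cartan_ext d C i j * c j = 0"
    proof
      fix j assume j: "j \<in> {1..n} - {k, Suc k, Suc (Suc k)}"
      have "cartan_ext d C i j = 0" by (rule ce_zero) (use j k in auto)
      thus "cartan_ext d C i j * c j = 0" by simp
    qed
  qed (use assms k in auto)
  also have "\<dots> = 2 * c i - c (i - 1) - c (i + 1)"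
    using k by (simp add: cartan_ext_def)
  finally show ?thesis .
qed

lemma Cc_row_last:
  assumes "d < n" "1 \<le> d"
  shows "Cc d C n c n = 2 * c n - c (n - 1)"
proof -
  obtain k where k: "n = Suc k" "d \<le> k" using assms by (cases n) auto
  have "Cc d C n c n = (\<Sum>j\<in>{k, Suc k}. cartan_ext d C n j * c j)"
    unfolding Cc_def
  proof (rule sum.mono_neutral_right)
    show "\<forall>j\<in>{1..n} - {k, Suc k}. cartan_ext d C n j * c j = 0"
    proof
      fix j assume j: "j \<in> {1..n} - {k, Suc k}"
      have "cartan_ext d C n j = 0" by (rule ce_zero) (use j k in auto)
      thus "cartan_ext d C n j * c j = 0" by simp
    qed
  qed (use assms k in auto)
  also have "\<dots> = 2 * c n - c (n - 1)"
    using k by (simp add: cartan_ext_def)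
  finally show ?thesis .
qed

lemma Xdet_lin:
  assumes d1: "1 \<le> d" and dk: "d \<le> Suc k"
  shows "Xdet d C k = Xdet d C d + (int k - int d) * Delta d C"
  using dk
proof (induction k rule: less_induct)
  case (less k)
  show ?case
  proof (cases "k \<ge> d + 2")
    case True
    define k' where "k' = k - 2"
    have k': "k = Suc (Suc k')" "d \<le> k'" using True unfolding k'_def by arith+
    have "Xdet d C k = 2 * Xdet d C (Suc k') - Xdet d C k'"
      using Xdet_rec[of d k' C] k' by simp
    also have "\<dots> = Xdet d C d + (int k - int d) * Delta d C"
      using less.IH[of "Suc k'"] less.IH[of k'] k' by (simp add: algebra_simps)
    finally show ?thesis .
  next
    case False
    have r: "Xdet d C (Suc d) = 2 * Xdet d C d - Xdet d C (d - 1)"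
      using Xdet_rec[of d "d - 1" C] d1 by (simp add: Suc_diff_le)
    have "k = d - 1 \<or> k = d \<or> k = Suc d" using less.prems False by arith
    moreover
    { assume "k = d - 1"
      hence "int k - int d = -1" using d1 by simp
      hence ?thesis using r \<open>k = d - 1\<close> unfolding Delta_def by simp }
    moreover
    { assume "k = d" hence ?thesis by simp }
    moreover
    { assume "k = Suc d" hence ?thesis unfolding Delta_def by simp }
    ultimately show ?thesis by blast
  qed
qed

lemma acoef_ge:
  assumes d1: "1 \<le> d" and di: "d \<le> i"
  shows "acoef d C i = Xdet d C (i - 1)"
proof (cases "i = d")
  case True
  have "adjugate d C d d = detn (d - 1) (\<lambda>a b. C (skip d a) (skip d b))"
    unfolding adjugate_def by simp
  also have "\<dots> = detn (d - 1) (cartan_ext d C)"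
    by (rule detn_cong) (auto simp: skip_def cartan_ext_def)
  finally show ?thesis using True unfolding acoef_def Xdet_def by simp
next
  case False
  thus ?thesis using di unfolding acoef_def by simp
qed

lemma identity_I:
  assumes d1: "1 \<le> d" and dn: "d \<le> n"
  shows "(\<Sum>i\<in>{1..n}. acoef d C i * Cc d C n c i) = Xdet d C n * c n"
  using dn
proof (induction n rule: dec_induct)
  case base
  have "(\<Sum>i\<in>{1..d}. acoef d C i * Cc d C d c i)
      = (\<Sum>i\<in>{1..d}. \<Sum>j\<in>{1..d}. c j * (adjugate d C d i * C i j))"
    unfolding Cc_def acoef_def
    by (rule sum.cong[OF refl]) (auto simp: sum_distrib_left cartan_ext_def intro!: sum.cong)
  also have "\<dots> = (\<Sum>j\<in>{1..d}. c j * (\<Sum>i\<in>{1..d}. adjugate d C d i * C i j))"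
    by (subst sum.swap) (simp add: sum_distrib_left)
  also have "\<dots> = (\<Sum>j\<in>{1..d}. c j * (if d = j then detn d C else 0))"
  proof (rule sum.cong[OF refl])
    fix j assume j: "j \<in> {1..d}"
    show "c j * (\<Sum>i\<in>{1..d}. adjugate d C d i * C i j) = c j * (if d = j then detn d C else 0)"
      using adj_identity[of d d j C] j d1 by simp
  qed
  also have "\<dots> = (\<Sum>j\<in>{1..d}. if d = j then c j * detn d C else 0)"
    by (rule sum.cong) auto
  also have "\<dots> = c d * detn d C"
    using d1 by (subst sum.delta') auto
  also have "detn d C = Xdet d C d"
    unfolding Xdet_def by (rule detn_cong) (auto simp: cartan_ext_def)
  finally show ?case by simp
next
  case (step n)
  have n1: "1 \<le> n" using step d1 by simp
  have cn: "cartan_ext d C i (Suc n) = (if i = n then -1 else 0)" if "i \<in> {1..n}" for i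
    using that step by (auto simp: cartan_ext_def)
  have last: "Cc d C (Suc n) c (Suc n) = 2 * c (Suc n) - c n"
    using Cc_row_last[of d "Suc n" C c] step d1 by simp
  have "(\<Sum>i\<in>{1..Suc n}. acoef d C i * Cc d C (Suc n) c i)
      = (\<Sum>i\<in>{1..n}. acoef d C i * Cc d C (Suc n) c i) + acoef d C (Suc n) * Cc d C (Suc n) c (Suc n)"
    by (simp add: sum.cl_ivl_Suc)
  also have "(\<Sum>i\<in>{1..n}. acoef d C i * Cc d C (Suc n) c i)
      = (\<Sum>i\<in>{1..n}. acoef d C i * Cc d C n c i) + (\<Sum>i\<in>{1..n}. acoef d C i * (cartan_ext d C i (Suc n) * c (Suc n)))"
    by (simp add: Cc_Suc distrib_left sum.distrib)
  also have "(\<Sum>i\<in>{1..n}. acoef d C i * (cartan_ext d C i (Suc n) * c (Suc n))) = - acoef d C n * c (Suc n)"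
    by (subst sum_single[where a = n]) (use n1 cn in auto)
  finally have "(\<Sum>i\<in>{1..Suc n}. acoef d C i * Cc d C (Suc n) c i)
      = Xdet d C n * c n - acoef d C n * c (Suc n) + acoef d C (Suc n) * (2 * c (Suc n) - c n)"
    using step.IH last by simp
  also have "\<dots> = (2 * Xdet d C n - Xdet d C (n - 1)) * c (Suc n)"
    using acoef_ge[OF d1, of n C] acoef_ge[OF d1, of "Suc n" C] step by (simp add: algebra_simps)
  also have "2 * Xdet d C n - Xdet d C (n - 1) = Xdet d C (Suc n)"
    using Xdet_rec[of d "n - 1" C] step n1 by (simp add: Suc_diff_le)
  finally show ?case .
qed

lemma seqlen_zero:
  assumes "x \<in> H1" "seqlen x < i"
  shows "x i = 0"
proof (rule ccontr)
  assume "x i \<noteq> 0"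
  have fin: "finite {i. x i \<noteq> 0}" using assms(1) unfolding H1_def by simp
  have "i \<le> Max {i. x i \<noteq> 0}" using Max_ge[OF fin] \<open>x i \<noteq> 0\<close> by simp
  hence "i \<le> seqlen x" using \<open>x i \<noteq> 0\<close> unfolding seqlen_def by auto
  thus False using assms(2) by simp
qed

lemma H1_zero0: "x \<in> H1 \<Longrightarrow> x 0 = 0" unfolding H1_def by simp

lemma sum_ext_zero:
  fixes m n :: nat
  assumes "m \<le> n" "\<And>i. m < i \<Longrightarrow> i \<le> n \<Longrightarrow> f i = 0"
  shows "(\<Sum>i\<in>{1..n}. f i) = (\<Sum>i\<in>{1..m}. f i)"
proof (rule sum.mono_neutral_right)
  show "finite {1..n}" by simp
  show "{1..m} \<subseteq> {1..n}" using assms(1) by auto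
  show "\<forall>i\<in>{1..n} - {1..m}. f i = 0"
  proof
    fix i assume "i \<in> {1..n} - {1..m}"
    hence "m < i" "i \<le> n" by auto
    thus "f i = 0" by (rule assms(2))
  qed
qed

lemma wt_sum:
  assumes d1: "1 \<le> d" and mx: "fst mu \<in> H1" and my: "snd mu \<in> H1"
    and P: "d \<le> P" "seqlen (fst mu) \<le> P" and Q: "seqlen (snd mu) \<le> Q" and n: "P + Q < n"
  shows "(\<Sum>i\<in>{1..n}. acoef d C i * wt n mu i) = hnorm d C mu + Xdet d C n * (\<Sum>j\<in>{1..Q}. snd mu j)"
proof -
  let ?x = "fst mu" and ?y = "snd mu"
  have "(\<Sum>i\<in>{1..n}. acoef d C i * wt n mu i)
      = (\<Sum>i\<in>{1..n}. acoef d C i * ?x i) + (\<Sum>i\<in>{1..n}. acoef d C i * ?y (n + 1 - i))"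
    by (simp add: wt_def distrib_left sum.distrib)
  also have "(\<Sum>i\<in>{1..n}. acoef d C i * ?x i) = (\<Sum>i\<in>{1..seqlen ?x}. acoef d C i * ?x i)"
    by (rule sum_ext_zero) (use P n seqlen_zero[OF mx] in auto)
  also have "(\<Sum>i\<in>{1..n}. acoef d C i * ?y (n + 1 - i)) = (\<Sum>j\<in>{1..n}. acoef d C (n + 1 - j) * ?y j)"
    by (rule sum.reindex_bij_witness[of _ "\<lambda>j. n + 1 - j" "\<lambda>j. n + 1 - j"]) auto
  also have "\<dots> = (\<Sum>j\<in>{1..Q}. acoef d C (n + 1 - j) * ?y j)"
    by (rule sum_ext_zero) (use Q n seqlen_zero[OF my] in auto)
  also have "\<dots> = (\<Sum>j\<in>{1..Q}. Xdet d C n * ?y j - Delta d C * (int j * ?y j))"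
  proof (rule sum.cong[OF refl])
    fix j assume j: "j \<in> {1..Q}"
    have "d \<le> n + 1 - j" using j P n by auto
    hence a: "acoef d C (n + 1 - j) = Xdet d C (n - j)"
      using acoef_ge[OF d1, of "n + 1 - j" C] j P n by simp
    have b: "Xdet d C (n - j) = Xdet d C d + (int (n - j) - int d) * Delta d C"
      by (rule Xdet_lin[OF d1]) (use j P n in auto)
    have c: "Xdet d C n = Xdet d C d + (int n - int d) * Delta d C"
      by (rule Xdet_lin[OF d1]) (use j P n in auto)
    have "int (n - j) = int n - int j" using j P n by auto
    hence "acoef d C (n + 1 - j) = Xdet d C n - int j * Delta d C"
      using a b c by (simp add: algebra_simps)
    thus "acoef d C (n + 1 - j) * ?y j = Xdet d C n * ?y j - Delta d C * (int j * ?y j)"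
      by (simp add: left_diff_distrib)
  qed
  also have "\<dots> = Xdet d C n * (\<Sum>j\<in>{1..Q}. ?y j) - Delta d C * (\<Sum>j\<in>{1..Q}. int j * ?y j)"
    by (simp add: sum_subtractf sum_distrib_left)
  also have "(\<Sum>j\<in>{1..Q}. int j * ?y j) = (\<Sum>j\<in>{1..seqlen ?y}. int j * ?y j)"
    by (rule sum_ext_zero) (use Q seqlen_zero[OF my] in auto)
  finally show ?thesis unfolding hnorm_def by simp
qed

lemma WI:
  assumes d1: "1 \<le> d"
    and mx: "fst mu \<in> H1" and my: "snd mu \<in> H1" and nx: "fst nu \<in> H1" and ny: "snd nu \<in> H1"
    and P: "d \<le> P" "seqlen (fst mu) \<le> P" "seqlen (fst nu) \<le> P"
    and Q: "seqlen (snd mu) \<le> Q" "seqlen (snd nu) \<le> Q" and n: "P + Q < n"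
    and sol: "\<And>i. i \<in> {1..n} \<Longrightarrow> Cc d C n c i = wt n mu i - wt n nu i"
  shows "Xdet d C n * c n = hnorm d C mu - hnorm d C nu + Xdet d C n * (\<Sum>j\<in>{1..Q}. snd mu j - snd nu j)"
proof -
  have "Xdet d C n * c n = (\<Sum>i\<in>{1..n}. acoef d C i * Cc d C n c i)"
    using identity_I[OF d1, of n C c] P n by simp
  also have "\<dots> = (\<Sum>i\<in>{1..n}. acoef d C i * wt n mu i - acoef d C i * wt n nu i)"
    by (rule sum.cong[OF refl]) (simp add: sol right_diff_distrib)
  also have "\<dots> = (\<Sum>i\<in>{1..n}. acoef d C i * wt n mu i) - (\<Sum>i\<in>{1..n}. acoef d C i * wt n nu i)"
    by (simp add: sum_subtractf)
  also have "\<dots> = hnorm d C mu - hnorm d C nu + Xdet d C n * (\<Sum>j\<in>{1..Q}. snd mu j - snd nu j)"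
    using wt_sum[OF d1 mx my P(1,2) Q(1) n] wt_sum[OF d1 nx ny P(1,3) Q(2) n]
    by (simp add: sum_subtractf algebra_simps)
  finally show ?thesis .
qed

definition Ff :: "nat \<Rightarrow> (nat \<Rightarrow> int) \<Rightarrow> nat \<Rightarrow> int" where
  "Ff Q y k = (\<Sum>j\<in>{1..Q}. y j * int (min j k))"

lemma min_2nd_diff:
  "int (min j (k + 2)) = 2 * int (min j (k + 1)) - int (min j k) - (if j = k + 1 then 1 else 0)"
proof -
  consider "j \<le> k" | "j = k + 1" | "k + 2 \<le> j" by arith
  thus ?thesis by cases (simp_all add: min_def)
qed

lemma Ff_rec:
  assumes "\<And>j. Q < j \<Longrightarrow> y j = 0"
  shows "Ff Q y (k + 2) = 2 * Ff Q y (k + 1) - Ff Q y k - y (k + 1)"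
proof -
  have "Ff Q y (k + 2) = (\<Sum>j\<in>{1..Q}. 2 * (y j * int (min j (k + 1))) - y j * int (min j k) - (if j = k + 1 then y j else 0))"
    unfolding Ff_def by (rule sum.cong[OF refl]) (simp only: min_2nd_diff, simp add: algebra_simps)
  also have "\<dots> = 2 * Ff Q y (k + 1) - Ff Q y k - (\<Sum>j\<in>{1..Q}. if j = k + 1 then y j else 0)"
    unfolding Ff_def by (simp add: sum_subtractf sum_distrib_left)
  also have "(\<Sum>j\<in>{1..Q}. if j = k + 1 then y j else 0) = y (k + 1)"
    using assms by (subst sum.delta) auto
  finally show ?thesis .
qed

lemma Ff0: "Ff Q y 0 = 0" unfolding Ff_def by simp

lemma Ff_big: "Q \<le> k \<Longrightarrow> Ff Q y k = (\<Sum>j\<in>{1..Q}. y j * int j)"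
  unfolding Ff_def by (rule sum.cong) auto

lemma RE:
  assumes d1: "1 \<le> d" and dP: "d \<le> P" and Pn: "P < n"
    and sol: "\<And>i. i \<in> {1..n} \<Longrightarrow> Cc d C n e i = w i"
    and wP: "\<And>i. P < i \<Longrightarrow> i \<le> n \<Longrightarrow> w i = y (n + 1 - i)"
    and yQ: "\<And>j. Q < j \<Longrightarrow> y j = 0"
    and en: "e n = Ff Q y 1"
  shows "\<And>k. 1 \<le> k \<Longrightarrow> k \<le> n - P \<Longrightarrow> e (n + 1 - k) = Ff Q y k"
proof -
  have main: "k + 1 \<le> n - P \<Longrightarrow> e (n - k) = Ff Q y (k + 1) \<and> e (n - k - 1) = Ff Q y (k + 2)" for k
  proof (induction k)
    case 0
    have "Cc d C n e n = 2 * e n - e (n - 1)"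
      by (rule Cc_row_last) (use dP Pn d1 in auto)
    moreover have "Cc d C n e n = w n" using sol Pn by simp
    moreover have "w n = y 1" using wP[of n] Pn by simp
    moreover have "Ff Q y (0 + 2) = 2 * Ff Q y (0 + 1) - Ff Q y 0 - y (0 + 1)"
      by (rule Ff_rec[OF yQ])
    ultimately show ?case using en by (simp add: Ff0)
  next
    case (Suc k)
    hence IH: "e (n - k) = Ff Q y (k + 1)" "e (n - k - 1) = Ff Q y (k + 2)" by auto
    let ?i = "n - k - 1"
    have i1: "d < ?i" "?i < n" "P < ?i" using Suc.prems dP by auto
    have "Cc d C n e ?i = 2 * e ?i - e (?i - 1) - e (?i + 1)"
      by (rule Cc_row_mid) (use i1 d1 in auto)
    moreover have "Cc d C n e ?i = w ?i" using sol i1 by simp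
    moreover have "w ?i = y (k + 2)" using wP[of ?i] i1 Suc.prems by simp
    moreover have "?i + 1 = n - k" using i1 by simp
    moreover have "Ff Q y (Suc k + 2) = 2 * Ff Q y (Suc k + 1) - Ff Q y (Suc k) - y (Suc k + 1)"
      by (rule Ff_rec[OF yQ])
    ultimately show ?case using IH by (simp add: algebra_simps)
  qed
  fix k assume k: "1 \<le> k" "k \<le> n - P"
  have "e (n - (k - 1)) = Ff Q y (k - 1 + 1)" using main[of "k - 1"] k by simp
  moreover have "n - (k - 1) = n + 1 - k" "k - 1 + 1 = k" using k by auto
  ultimately show "e (n + 1 - k) = Ff Q y k" by simp
qed

lemma convex_flat:
  fixes f :: "nat \<Rightarrow> int"
  assumes bnd: "\<And>i. A \<le> i \<Longrightarrow> i \<le> B \<Longrightarrow> 0 \<le> f i \<and> f i \<le> int t"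
    and cvx: "\<And>i. A < i \<Longrightarrow> i < B \<Longrightarrow> 2 * f i \<le> f (i - 1) + f (i + 1)"
    and i: "A + t \<le> i" "i + 1 + t \<le> B"
  shows "f (Suc i) = f i"
proof -
  define s where "s j = f (Suc j) - f j" for j
  have mono1: "s j \<le> s (Suc j)" if "A \<le> j" "j + 2 \<le> B" for j
    using cvx[of "Suc j"] that unfolding s_def by simp
  have mono: "s j \<le> s l" if "A \<le> j" "j \<le> l" "l + 1 \<le> B" for j l
    using that
  proof (induction l)
    case 0 thus ?case by simp
  next
    case (Suc l)
    show ?case
    proof (cases "j = Suc l")
      case True thus ?thesis by simp
    next
      case False
      hence "s j \<le> s l" using Suc by simp
      also have "s l \<le> s (Suc l)" using mono1[of l] Suc.prems False by simp
      finally show ?thesis .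
    qed
  qed
  show ?thesis
  proof (rule ccontr)
    assume ne: "f (Suc i) \<noteq> f i"
    show False
    proof (cases "s i \<ge> 1")
      case True
      have up: "f (i + m) \<ge> f i + int m" if "m \<le> t + 1" for m
        using that
      proof (induction m)
        case 0 thus ?case by simp
      next
        case (Suc m)
        have "s i \<le> s (i + m)" by (rule mono) (use Suc.prems i in auto)
        hence "f (i + Suc m) \<ge> f (i + m) + 1" using True unfolding s_def by simp
        thus ?case using Suc by simp
      qed
      have "f (i + (t + 1)) \<ge> f i + int (t + 1)" by (rule up) simp
      moreover have "0 \<le> f i" using bnd[of i] i by simp
      moreover have "f (i + (t + 1)) \<le> int t" using bnd[of "i + (t + 1)"] i by simp
      ultimately show False by simp
    next
      case False
      hence neg: "s i \<le> -1" using ne unfolding s_def by simp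
      have down: "f (i + 1 - m) \<ge> f (i + 1) + int m" if "m \<le> t + 1" for m
        using that
      proof (induction m)
        case 0 thus ?case by simp
      next
        case (Suc m)
        have "s (i - m) \<le> s i" by (rule mono) (use Suc.prems i in auto)
        hence "s (i - m) \<le> -1" using neg by simp
        moreover have "Suc (i - m) = i + 1 - m" using Suc.prems i by auto
        moreover have "i + 1 - Suc m = i - m" by simp
        ultimately have "f (i + 1 - Suc m) \<ge> f (i + 1 - m) + 1" unfolding s_def by simp
        thus ?case using Suc by simp
      qed
      have "f (i + 1 - (t + 1)) \<ge> f (i + 1) + int (t + 1)" by (rule down) simp
      moreover have "0 \<le> f (i + 1)" using bnd[of "i + 1"] i by simp
      moreover have "f (i + 1 - (t + 1)) \<le> int t" using bnd[of "i + 1 - (t + 1)"] i by simp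
      ultimately show False by simp
    qed
  qed
qed

lemma ce_shift: "d < a \<Longrightarrow> cartan_ext d C (Suc a) (Suc b) = cartan_ext d C a b"
  by (auto simp: cartan_ext_def)

lemma Cc_cong2:
  "(\<And>j. j \<in> {1..n} \<Longrightarrow> cartan_ext d C i j * f j = cartan_ext d C i j * g j) \<Longrightarrow> Cc d C n f i = Cc d C n g i"
  unfolding Cc_def by (rule sum.cong) auto

lemma Cc_ins:
  assumes d1: "1 \<le> d" and dm: "d < m" and mn: "m \<le> n" and cm: "c (m - 1) = c m"
    and i: "1 \<le> i" "i \<le> Suc n"
  shows "Cc d C (Suc n) (\<lambda>j. if j < m then c j else c (j - 1)) i
       = (if i < m then Cc d C n c i else if i = m then 0 else Cc d C n c (i - 1))"
proof -
  define cp where "cp = (\<lambda>j. if j < m then c j else c (j - 1))"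
  consider "i < m" | "i = m" | "m < i" by arith
  thus ?thesis
  proof cases
    case 1
    have "Cc d C (Suc n) cp i = Cc d C n cp i + cartan_ext d C i (Suc n) * cp (Suc n)"
      by (rule Cc_Suc)
    also have "cartan_ext d C i (Suc n) = 0" by (rule ce_zero) (use 1 dm mn in auto)
    also have "Cc d C n cp i = Cc d C n c i"
    proof (rule Cc_cong2)
      fix j assume j: "j \<in> {1..n}"
      consider "j < m" | "j = m" | "m < j" by arith
      thus "cartan_ext d C i j * cp j = cartan_ext d C i j * c j"
      proof cases
        case 3
        have "cartan_ext d C i j = 0" by (rule ce_zero) (use 1 3 dm in auto)
        thus ?thesis by simp
      qed (use cm in \<open>auto simp: cp_def\<close>)
    qed
    finally show ?thesis using 1 unfolding cp_def by simp
  next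
    case 2
    have "Cc d C (Suc n) cp m = 2 * cp m - cp (m - 1) - cp (m + 1)"
      by (rule Cc_row_mid) (use dm mn d1 in auto)
    also have "\<dots> = 0" using cm dm d1 unfolding cp_def by auto
    finally show ?thesis using 2 unfolding cp_def by simp
  next
    case 3
    define a where "a = i - 1"
    have a: "i = Suc a" "d < a" "m \<le> a" using 3 dm unfolding a_def by auto
    have "Cc d C (Suc n) cp i = (\<Sum>j\<in>{0..n}. cartan_ext d C i (Suc j) * cp (Suc j))"
      unfolding Cc_def
      by (rule sum.reindex_bij_witness[of _ Suc "\<lambda>j. j - 1"]) auto
    also have "\<dots> = (\<Sum>j\<in>{0..n}. cartan_ext d C a j * c j)"
    proof (rule sum.cong[OF refl])
      fix j assume j: "j \<in> {0..n}"
      have e: "cartan_ext d C i (Suc j) = cartan_ext d C a j" using ce_shift[of d a C j] a by simp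
      show "cartan_ext d C i (Suc j) * cp (Suc j) = cartan_ext d C a j * c j"
      proof (cases "Suc j < m")
        case True
        have "cartan_ext d C a j = 0" by (rule ce_zero) (use True a in auto)
        thus ?thesis using e by simp
      qed (use e in \<open>auto simp: cp_def\<close>)
    qed
    also have "\<dots> = cartan_ext d C a 0 * c 0 + (\<Sum>j\<in>{1..n}. cartan_ext d C a j * c j)"
    proof -
      have "{0..n} = insert 0 {1..n}" by auto
      thus ?thesis by simp
    qed
    also have "cartan_ext d C a 0 = 0" by (rule ce_zero) (use a d1 in auto)
    finally show ?thesis using 3 unfolding cp_def Cc_def a_def by simp
  qed
qed

lemma wt_ins:
  assumes xm: "\<And>j. m \<le> j \<Longrightarrow> fst mu j = 0" and yn: "\<And>j. n + 2 - m \<le> j \<Longrightarrow> snd mu j = 0"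
    and m: "1 \<le> m" "m \<le> n" and i: "1 \<le> i" "i \<le> Suc n"
  shows "wt (Suc n) mu i = (if i < m then wt n mu i else if i = m then 0 else wt n mu (i - 1))"
proof -
  consider "i < m" | "i = m" | "m < i" by arith
  thus ?thesis
  proof cases
    case 1
    have "snd mu (Suc n + 1 - i) = 0" "snd mu (n + 1 - i) = 0" using yn 1 m i by auto
    thus ?thesis using 1 m i unfolding wt_def by auto
  next
    case 2
    have "snd mu (Suc n + 1 - i) = 0" "fst mu i = 0" using yn xm 2 m i by auto
    thus ?thesis using 2 m i unfolding wt_def by auto
  next
    case 3
    have "fst mu i = 0" "fst mu (i - 1) = 0" using xm 3 by auto
    moreover have "Suc n + 1 - i = n + 1 - (i - 1)" using 3 i m by auto
    ultimately show ?thesis using 3 m i unfolding wt_def by auto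
  qed
qed

definition sols :: "nat \<Rightarrow> (nat \<Rightarrow> nat \<Rightarrow> int) \<Rightarrow> nat \<Rightarrow> (nat \<Rightarrow> int) \<times> (nat \<Rightarrow> int) \<Rightarrow> (nat \<Rightarrow> int) \<times> (nat \<Rightarrow> int) \<Rightarrow> (nat \<Rightarrow> int) \<Rightarrow> bool" where
  "sols d C n mu nu c \<longleftrightarrow> (\<forall>i\<in>{1..n}. Cc d C n c i = wt n mu i - wt n nu i)"

lemma sols_ins:
  assumes d1: "1 \<le> d" and dm: "d < m" and mn: "m \<le> n" and cm: "c (m - 1) = c m"
    and xm: "\<And>j. m \<le> j \<Longrightarrow> fst mu j = 0" "\<And>j. m \<le> j \<Longrightarrow> fst nu j = 0"
    and yn: "\<And>j. n + 2 - m \<le> j \<Longrightarrow> snd mu j = 0" "\<And>j. n + 2 - m \<le> j \<Longrightarrow> snd nu j = 0"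
    and s: "sols d C n mu nu c"
  shows "sols d C (Suc n) mu nu (\<lambda>j. if j < m then c j else c (j - 1))"
  unfolding sols_def
proof
  fix i assume i: "i \<in> {1..Suc n}"
  have m1: "1 \<le> m" using d1 dm by simp
  have s': "Cc d C n c k = wt n mu k - wt n nu k" if "k \<in> {1..n}" for k
    using s that unfolding sols_def by auto
  have A: "Cc d C (Suc n) (\<lambda>j. if j < m then c j else c (j - 1)) i
       = (if i < m then Cc d C n c i else if i = m then 0 else Cc d C n c (i - 1))"
    using Cc_ins[OF d1 dm mn cm, of i C] i by simp
  have B: "wt (Suc n) mu i = (if i < m then wt n mu i else if i = m then 0 else wt n mu (i - 1))"
    using wt_ins[OF xm(1) yn(1) m1 mn, of i] i by simp
  have B': "wt (Suc n) nu i = (if i < m then wt n nu i else if i = m then 0 else wt n nu (i - 1))"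
    using wt_ins[OF xm(2) yn(2) m1 mn, of i] i by simp
  consider "i < m" | "i = m" | "m < i" by arith
  thus "Cc d C (Suc n) (\<lambda>j. if j < m then c j else c (j - 1)) i = wt (Suc n) mu i - wt (Suc n) nu i"
  proof cases
    case 1 thus ?thesis using A B B' s'[of i] i mn by simp
  next
    case 2 thus ?thesis using A B B' by simp
  next
    case 3
    have "i - 1 \<in> {1..n}" using 3 i m1 by auto
    thus ?thesis using A B B' s'[of "i - 1"] 3 by simp
  qed
qed

lemma sols_del:
  assumes d1: "1 \<le> d" and dm: "d < m" and mn: "m \<le> n" and cm: "c (m - 1) = c m" "c m = c (m + 1)"
    and xm: "\<And>j. m \<le> j \<Longrightarrow> fst mu j = 0" "\<And>j. m \<le> j \<Longrightarrow> fst nu j = 0"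
    and yn: "\<And>j. n + 2 - m \<le> j \<Longrightarrow> snd mu j = 0" "\<And>j. n + 2 - m \<le> j \<Longrightarrow> snd nu j = 0"
    and s: "sols d C (Suc n) mu nu c"
  shows "sols d C n mu nu (\<lambda>j. if j < m then c j else c (j + 1))"
  unfolding sols_def
proof
  define g where "g = (\<lambda>j. if j < m then c j else c (j + 1))"
  have gm: "g (m - 1) = g m" using cm dm d1 unfolding g_def by auto
  have gp: "(\<lambda>j. if j < m then g j else g (j - 1)) = c"
  proof
    fix j show "(if j < m then g j else g (j - 1)) = c j"
      using cm dm d1 unfolding g_def by (cases "j < m"; cases "j = m") auto
  qed
  have m1: "1 \<le> m" using d1 dm by simp
  fix i assume i: "i \<in> {1..n}"
  show "Cc d C n g i = wt n mu i - wt n nu i"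
  proof (cases "i < m")
    case True
    have "Cc d C (Suc n) c i = Cc d C n g i"
      using Cc_ins[OF d1 dm mn gm, of i C] True i unfolding gp by simp
    moreover have "Cc d C (Suc n) c i = wt (Suc n) mu i - wt (Suc n) nu i" using s i unfolding sols_def by simp
    ultimately show ?thesis
      using wt_ins[OF xm(1) yn(1) m1 mn, of i] wt_ins[OF xm(2) yn(2) m1 mn, of i] True i by simp
  next
    case False
    have "Cc d C (Suc n) c (Suc i) = Cc d C n g i"
      using Cc_ins[OF d1 dm mn gm, of "Suc i" C] False i unfolding gp by simp
    moreover have "Cc d C (Suc n) c (Suc i) = wt (Suc n) mu (Suc i) - wt (Suc n) nu (Suc i)"
      using s i unfolding sols_def by simp
    ultimately show ?thesis
      using wt_ins[OF xm(1) yn(1) m1 mn, of "Suc i"] wt_ins[OF xm(2) yn(2) m1 mn, of "Suc i"] False i by simp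
  qed
qed

lemma Qge_int: "Qge d C n b b' \<longleftrightarrow> (\<exists>c :: nat \<Rightarrow> int. (\<forall>j. 0 \<le> c j) \<and> (\<forall>i\<in>{1..n}. b i - b' i = Cc d C n c i))"
proof
  assume "Qge d C n b b'"
  then obtain c :: "nat \<Rightarrow> nat" where "\<forall>i\<in>{1..n}. b i - b' i = Cc d C n (\<lambda>j. int (c j)) i"
    unfolding Qge_Cc by blast
  thus "\<exists>c :: nat \<Rightarrow> int. (\<forall>j. 0 \<le> c j) \<and> (\<forall>i\<in>{1..n}. b i - b' i = Cc d C n c i)"
    by (intro exI[of _ "\<lambda>j. int (c j)"]) auto
next
  assume "\<exists>c :: nat \<Rightarrow> int. (\<forall>j. 0 \<le> c j) \<and> (\<forall>i\<in>{1..n}. b i - b' i = Cc d C n c i)"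
  then obtain c :: "nat \<Rightarrow> int" where c: "\<forall>j. 0 \<le> c j" "\<forall>i\<in>{1..n}. b i - b' i = Cc d C n c i" by blast
  have "(\<lambda>j. int (nat (c j))) = c" using c(1) by auto
  thus "Qge d C n b b'" unfolding Qge_Cc using c(2) by (intro exI[of _ "\<lambda>j. nat (c j)"]) simp
qed

lemma Qge_sols: "Qge d C n (wt n mu) (wt n nu) \<longleftrightarrow> (\<exists>c. (\<forall>j. 0 \<le> c j) \<and> sols d C n mu nu c)"
proof
  assume "Qge d C n (wt n mu) (wt n nu)"
  then obtain c :: "nat \<Rightarrow> int" where c: "\<forall>j. 0 \<le> c j" "\<forall>i\<in>{1..n}. wt n mu i - wt n nu i = Cc d C n c i"
    unfolding Qge_int by blast
  have "sols d C n mu nu c" unfolding sols_def using c(2) by simp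
  thus "\<exists>c. (\<forall>j. 0 \<le> c j) \<and> sols d C n mu nu c" using c(1) by blast
next
  assume "\<exists>c. (\<forall>j. 0 \<le> c j) \<and> sols d C n mu nu c"
  then obtain c where c: "\<forall>j. 0 \<le> c j" "sols d C n mu nu c" by blast
  have "\<forall>i\<in>{1..n}. wt n mu i - wt n nu i = Cc d C n c i" using c(2) unfolding sols_def by simp
  thus "Qge d C n (wt n mu) (wt n nu)" unfolding Qge_int using c(1) by blast
qed

lemma sols_ins_iter:
  assumes d1: "1 \<le> d" and dm: "d < m" and mn: "m \<le> n" and cm: "c (m - 1) = c m"
    and xm: "\<And>j. m \<le> j \<Longrightarrow> fst mu j = 0" "\<And>j. m \<le> j \<Longrightarrow> fst nu j = 0"
    and yn: "\<And>j. n + 2 - m \<le> j \<Longrightarrow> snd mu j = 0" "\<And>j. n + 2 - m \<le> j \<Longrightarrow> snd nu j = 0"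
    and s: "sols d C n mu nu c" and nn: "\<forall>j. 0 \<le> c j"
  shows "\<exists>c'. sols d C (n + k) mu nu c' \<and> (\<forall>j. 0 \<le> c' j) \<and> c' (m - 1) = c' m \<and> c' (n + k) = c n"
proof (induction k)
  case 0 thus ?case using s nn cm by (intro exI[of _ c]) simp
next
  case (Suc k)
  then obtain c' where c': "sols d C (n + k) mu nu c'" "\<forall>j. 0 \<le> c' j" "c' (m - 1) = c' m" "c' (n + k) = c n"
    by blast
  have "sols d C (Suc (n + k)) mu nu (\<lambda>j. if j < m then c' j else c' (j - 1))"
    by (rule sols_ins[OF d1 dm _ c'(3) xm _ _ c'(1)]) (use mn yn in auto)
  moreover have "(\<lambda>j. if j < m then c' j else c' (j - 1)) (m - 1) = (\<lambda>j. if j < m then c' j else c' (j - 1)) m"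
    using dm d1 c'(3) by auto
  ultimately show ?case using c' mn
    by (intro exI[of _ "\<lambda>j. if j < m then c' j else c' (j - 1)"]) auto
qed

lemma sols_del_iter:
  assumes d1: "1 \<le> d" and dm: "d < m" and mn: "m \<le> n"
    and xm: "\<And>j. m \<le> j \<Longrightarrow> fst mu j = 0" "\<And>j. m \<le> j \<Longrightarrow> fst nu j = 0"
    and yn: "\<And>j. n + 2 - m \<le> j \<Longrightarrow> snd mu j = 0" "\<And>j. n + 2 - m \<le> j \<Longrightarrow> snd nu j = 0"
  shows "sols d C (n + k) mu nu c \<Longrightarrow> (\<forall>j. 0 \<le> c j) \<Longrightarrow> (\<forall>i. m - 1 \<le> i \<longrightarrow> i < m + k \<longrightarrow> c i = c (Suc i))
     \<Longrightarrow> \<exists>c0. sols d C n mu nu c0 \<and> (\<forall>j. 0 \<le> c0 j)"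
proof (induction k arbitrary: c)
  case 0 thus ?case by auto
next
  case (Suc k)
  have w1: "c (m - 1) = c m" using Suc.prems(3)[rule_format, of "m - 1"] dm d1 by auto
  have w2: "c m = c (m + 1)" using Suc.prems(3)[rule_format, of m] dm d1 by auto
  define g where "g = (\<lambda>j. if j < m then c j else c (j + 1))"
  have "sols d C (n + k) mu nu g"
    unfolding g_def
    by (rule sols_del[OF d1 dm _ w1 w2 xm]) (use mn yn Suc.prems(1) in auto)
  moreover have "\<forall>j. 0 \<le> g j" using Suc.prems(2) unfolding g_def by auto
  moreover have "\<forall>i. m - 1 \<le> i \<longrightarrow> i < m + k \<longrightarrow> g i = g (Suc i)"
  proof (intro allI impI)
    fix i assume i: "m - 1 \<le> i" "i < m + k"
    show "g i = g (Suc i)"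
    proof (cases "i < m")
      case True
      hence "i = m - 1" using i by auto
      thus ?thesis using w1 w2 dm d1 unfolding g_def by auto
    next
      case False
      thus ?thesis using Suc.prems(3)[rule_format, of "Suc i"] i unfolding g_def by auto
    qed
  qed
  ultimately show ?case using Suc.IH by blast
qed

lemma seqlen_le:
  assumes "\<And>i. m < i \<Longrightarrow> x i = 0" "finite {i. x i \<noteq> 0}"
  shows "seqlen x \<le> m"
proof (cases "\<exists>i. x i \<noteq> 0")
  case True
  have all: "\<forall>a\<in>{i. x i \<noteq> 0}. a \<le> m" using assms(1) not_le by blast
  have "Max {i. x i \<noteq> 0} \<le> m"
    using True assms(2) all by (subst Max_le_iff) auto
  thus ?thesis using True unfolding seqlen_def by simp
next
  case False thus ?thesis unfolding seqlen_def by simp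
qed

lemma adj_solve:
  assumes "1 \<le> k" "k \<le> n"
  shows "(\<Sum>i\<in>{1..n}. adjugate n (cartan_ext d C) k i * Cc d C n e i) = Xdet d C n * e k"
proof -
  have "(\<Sum>i\<in>{1..n}. adjugate n (cartan_ext d C) k i * Cc d C n e i)
      = (\<Sum>i\<in>{1..n}. \<Sum>j\<in>{1..n}. e j * (adjugate n (cartan_ext d C) k i * cartan_ext d C i j))"
    unfolding Cc_def by (simp add: sum_distrib_left algebra_simps)
  also have "\<dots> = (\<Sum>j\<in>{1..n}. e j * (\<Sum>i\<in>{1..n}. adjugate n (cartan_ext d C) k i * cartan_ext d C i j))"
    by (subst sum.swap) (simp add: sum_distrib_left)
  also have "\<dots> = (\<Sum>j\<in>{1..n}. if k = j then e j * Xdet d C n else 0)"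
  proof (rule sum.cong[OF refl])
    fix j assume j: "j \<in> {1..n}"
    show "e j * (\<Sum>i\<in>{1..n}. adjugate n (cartan_ext d C) k i * cartan_ext d C i j) = (if k = j then e j * Xdet d C n else 0)"
      using adj_identity[of k n j "cartan_ext d C"] j assms unfolding Xdet_def by simp
  qed
  also have "\<dots> = e k * Xdet d C n" using assms by (subst sum.delta') auto
  finally show ?thesis by simp
qed

locale L =
  fixes d :: nat and C :: "nat \<Rightarrow> nat \<Rightarrow> int" and lam1 lam2 :: "(nat \<Rightarrow> int) \<times> (nat \<Rightarrow> int)"
  assumes d1: "1 \<le> d" and ext: "extensible d C" and l1: "lam1 \<in> H2p" and l2: "lam2 \<in> H2p"
    and hge: "Hge d C lam1 lam2"
begin

definition "P = max d (max (seqlen (fst lam1)) (seqlen (fst lam2)))"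
definition "Q = max (seqlen (snd lam1)) (seqlen (snd lam2))"
definition "dy j = snd lam1 j - snd lam2 j"
definition "Td = (\<Sum>j\<in>{1..Q}. dy j * int j)"
definition "t = nat Td"
definition "Lb = P + t + 2"
definition "Kq = Q + t + 1"
definition "NX = d + nat \<bar>Xdet d C d\<bar> + 1"
definition "N1 = max NX (Lb + Kq)"

lemma H1s: "fst lam1 \<in> H1" "snd lam1 \<in> H1" "fst lam2 \<in> H1" "snd lam2 \<in> H1"
  using l1 l2 unfolding H2p_def H1p_def by auto

lemma x1z: "P < i \<Longrightarrow> fst lam1 i = 0" using seqlen_zero[OF H1s(1)] unfolding P_def by auto
lemma x2z: "P < i \<Longrightarrow> fst lam2 i = 0" using seqlen_zero[OF H1s(3)] unfolding P_def by auto
lemma y1z: "Q < i \<Longrightarrow> snd lam1 i = 0" using seqlen_zero[OF H1s(2)] unfolding Q_def by auto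
lemma y2z: "Q < i \<Longrightarrow> snd lam2 i = 0" using seqlen_zero[OF H1s(4)] unfolding Q_def by auto

lemma dP: "d \<le> P" unfolding P_def by simp
lemma dLb: "d < Lb" unfolding Lb_def P_def by simp

lemma Delta_ne: "Delta d C \<noteq> 0" using ext unfolding extensible_def by simp

lemma Xdet_ne: assumes "NX \<le> n" shows "Xdet d C n \<noteq> 0"
proof -
  have e: "Xdet d C n = Xdet d C d + (int n - int d) * Delta d C"
    by (rule Xdet_lin[OF d1]) (use assms in \<open>auto simp: NX_def\<close>)
  have a: "int n - int d \<ge> \<bar>Xdet d C d\<bar> + 1" using assms unfolding NX_def by auto
  have "\<bar>(int n - int d) * Delta d C\<bar> = (int n - int d) * \<bar>Delta d C\<bar>"
    using a by (simp add: abs_mult)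
  also have "\<dots> \<ge> (int n - int d) * 1"
    using Delta_ne a by (intro mult_left_mono) auto
  finally have "\<bar>(int n - int d) * Delta d C\<bar> > \<bar>Xdet d C d\<bar>" using a by simp
  thus ?thesis using e by auto
qed

lemma Xdet_step: assumes "d \<le> n" shows "Xdet d C (Suc n) - Xdet d C n = Delta d C"
proof -
  have "Xdet d C (Suc n) = Xdet d C d + (int (Suc n) - int d) * Delta d C"
    by (rule Xdet_lin[OF d1]) (use assms in auto)
  moreover have "Xdet d C n = Xdet d C d + (int n - int d) * Delta d C"
    by (rule Xdet_lin[OF d1]) (use assms in auto)
  ultimately show ?thesis by (simp add: algebra_simps)
qed

lemma hn: "hnorm d C lam1 = hnorm d C lam2" using hge unfolding Hge_def by simp

lemma wt1z: "P < i \<Longrightarrow> i \<le> n \<Longrightarrow> Q < n + 1 - i \<Longrightarrow> wt n lam1 i = 0"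
  using x1z y1z unfolding wt_def by auto

lemma SL:
  assumes n: "N1 \<le> n" and bnn: "\<And>i. i \<in> {1..n} \<Longrightarrow> 0 \<le> \<beta> i"
    and c: "\<forall>j. 0 \<le> c j" "\<And>i. i \<in> {1..n} \<Longrightarrow> Cc d C n c i = wt n lam1 i - \<beta> i"
    and c': "\<forall>j. 0 \<le> c' j" "\<And>i. i \<in> {1..n} \<Longrightarrow> Cc d C n c' i = \<beta> i - wt n lam2 i"
  shows "\<And>i. Lb - 1 \<le> i \<Longrightarrow> i \<le> n - Kq \<Longrightarrow> c (Suc i) = c i \<and> c' (Suc i) = c' i"
    and "\<And>i. Lb \<le> i \<Longrightarrow> i \<le> n - Kq \<Longrightarrow> \<beta> i = 0"
proof -
  have nb: "Lb + Kq \<le> n" "NX \<le> n" using n unfolding N1_def by auto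
  define e where "e j = c j + c' j" for j
  have esol: "Cc d C n e i = wt n lam1 i - wt n lam2 i" if "i \<in> {1..n}" for i
    using Cc_add[of d C n c c' i] c(2)[OF that] c'(2)[OF that] unfolding e_def by simp
  have PQn: "P + Q < n" using nb unfolding Lb_def Kq_def by simp
  have "Xdet d C n * e n = hnorm d C lam1 - hnorm d C lam2 + Xdet d C n * (\<Sum>j\<in>{1..Q}. snd lam1 j - snd lam2 j)"
    by (rule WI[OF d1 H1s(1,2) H1s(3,4)]) (use PQn esol in \<open>auto simp: P_def Q_def\<close>)
  hence en0: "e n = (\<Sum>j\<in>{1..Q}. snd lam1 j - snd lam2 j)" using hn Xdet_ne[OF nb(2)] by simp
  have "Ff Q dy 1 = (\<Sum>j\<in>{1..Q}. snd lam1 j - snd lam2 j)"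
    unfolding Ff_def dy_def by (rule sum.cong) auto
  hence en: "e n = Ff Q dy 1" using en0 by simp
  have wP: "wt n lam1 i - wt n lam2 i = dy (n + 1 - i)" if "P < i" "i \<le> n" for i
    using that x1z x2z unfolding wt_def dy_def by auto
  have yQ: "dy j = 0" if "Q < j" for j using that y1z y2z unfolding dy_def by auto
  have re: "e (n + 1 - k) = Ff Q dy k" if "1 \<le> k" "k \<le> n - P" for k
    using RE[OF d1 dP _ esol wP yQ en] that PQn by auto
  have emid: "e i = Td" if "P + 1 \<le> i" "i \<le> n - Q" for i
  proof -
    have "e (n + 1 - (n + 1 - i)) = Ff Q dy (n + 1 - i)" by (rule re) (use that PQn in auto)
    moreover have "n + 1 - (n + 1 - i) = i" using that PQn by auto
    moreover have "Ff Q dy (n + 1 - i) = Td" unfolding Td_def by (rule Ff_big) (use that in auto)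
    ultimately show ?thesis by simp
  qed
  have "0 \<le> e (P + 1)" using c(1) c'(1) unfolding e_def by (simp add: add_nonneg_nonneg)
  hence Tnn: "0 \<le> Td" using emid[of "P + 1"] PQn by simp
  hence tT: "int t = Td" unfolding t_def by simp
  have flat: "c (Suc i) = c i" if i: "Lb - 1 \<le> i" "i \<le> n - Kq" for i
  proof (rule convex_flat[of "P + 1" "n - Q" c t])
    fix j assume j: "P + 1 \<le> j" "j \<le> n - Q"
    have "c j \<le> e j" using c'(1) unfolding e_def by simp
    thus "0 \<le> c j \<and> c j \<le> int t" using c(1) emid[OF j] tT by simp
  next
    fix j assume j: "P + 1 < j" "j < n - Q"
    have "Cc d C n c j = 2 * c j - c (j - 1) - c (j + 1)"
      by (rule Cc_row_mid) (use j dP d1 in auto)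
    moreover have "Cc d C n c j = wt n lam1 j - \<beta> j" using c(2)[of j] j by simp
    moreover have "wt n lam1 j = 0" by (rule wt1z) (use j in auto)
    moreover have "0 \<le> \<beta> j" using bnn[of j] j by simp
    ultimately show "2 * c j \<le> c (j - 1) + c (j + 1)" by simp
  qed (use i in \<open>auto simp: Lb_def Kq_def\<close>)
  show "c (Suc i) = c i \<and> c' (Suc i) = c' i" if i: "Lb - 1 \<le> i" "i \<le> n - Kq" for i
  proof -
    have "e (Suc i) = Td" "e i = Td" using emid i unfolding Lb_def Kq_def by auto
    thus ?thesis using flat[OF i] unfolding e_def by simp
  qed
  show "\<beta> i = 0" if i: "Lb \<le> i" "i \<le> n - Kq" for i
  proof -
    have "Cc d C n c i = 2 * c i - c (i - 1) - c (i + 1)"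
      by (rule Cc_row_mid) (use i dP d1 in \<open>auto simp: Lb_def Kq_def\<close>)
    moreover have "Cc d C n c i = wt n lam1 i - \<beta> i" using c(2)[of i] i unfolding Lb_def Kq_def by simp
    moreover have "wt n lam1 i = 0" by (rule wt1z) (use i in \<open>auto simp: Lb_def Kq_def\<close>)
    moreover have "c (Suc (i - 1)) = c (i - 1)" by (rule flat) (use i in \<open>auto simp: Lb_def\<close>)
    moreover have "c (Suc i) = c i" by (rule flat) (use i in auto)
    moreover have "Suc (i - 1) = i" using i unfolding Lb_def by simp
    ultimately show ?thesis by simp
  qed
qed

end

context L begin

lemma sub:
  assumes n: "N1 \<le> n" and b: "\<beta> \<in> Ivaln d C n lam1 lam2"
  shows "\<beta> \<in> (\<lambda>g. wt n g) ` Ival d C lam1 lam2"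
proof -
  have nb: "Lb + Kq \<le> n" "NX \<le> n" using n unfolding N1_def by auto
  have dom: "dominant n \<beta>" and q1: "Qge d C n (wt n lam1) \<beta>" and q2: "Qge d C n \<beta> (wt n lam2)"
    using b unfolding Ivaln_def by auto
  obtain c where c: "\<forall>j. 0 \<le> c j" "\<forall>i\<in>{1..n}. wt n lam1 i - \<beta> i = Cc d C n c i"
    using q1 unfolding Qge_int by blast
  obtain c' where c': "\<forall>j. 0 \<le> c' j" "\<forall>i\<in>{1..n}. \<beta> i - wt n lam2 i = Cc d C n c' i"
    using q2 unfolding Qge_int by blast
  have bnn: "\<And>i. i \<in> {1..n} \<Longrightarrow> 0 \<le> \<beta> i" using dom unfolding dominant_def by auto
  have bout: "\<And>i. i \<notin> {1..n} \<Longrightarrow> \<beta> i = 0" using dom unfolding dominant_def by auto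
  have c2: "\<And>i. i \<in> {1..n} \<Longrightarrow> Cc d C n c i = wt n lam1 i - \<beta> i" using c(2) by simp
  have c2': "\<And>i. i \<in> {1..n} \<Longrightarrow> Cc d C n c' i = \<beta> i - wt n lam2 i" using c'(2) by simp
  have flat: "c (Suc i) = c i \<and> c' (Suc i) = c' i" if "Lb - 1 \<le> i" "i \<le> n - Kq" for i
    using SL(1)[of n \<beta> c c' i, OF n bnn c(1) c2 c'(1) c2'] that by blast
  have bz: "\<beta> i = 0" if "Lb \<le> i" "i \<le> n - Kq" for i
    using SL(2)[of n \<beta> c c' i, OF n bnn c(1) c2 c'(1) c2'] that by blast
  define gx where "gx i = (if 1 \<le> i \<and> i < Lb then \<beta> i else 0)" for i
  define gy where "gy j = (if 1 \<le> j \<and> j \<le> Kq then \<beta> (n + 1 - j) else 0)" for j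
  define \<gamma> where "\<gamma> = (gx, gy)"
  have gxz: "\<And>j. Lb \<le> j \<Longrightarrow> fst \<gamma> j = 0" unfolding \<gamma>_def gx_def by auto
  have gyz: "\<And>j. Kq < j \<Longrightarrow> snd \<gamma> j = 0" unfolding \<gamma>_def gy_def by auto
  have gx0: "fst \<gamma> 0 = 0" "snd \<gamma> 0 = 0" unfolding \<gamma>_def gx_def gy_def by auto
  have finx: "finite {i. fst \<gamma> i \<noteq> 0}"
  proof (rule finite_subset[of _ "{..<Lb}"])
    show "{i. fst \<gamma> i \<noteq> 0} \<subseteq> {..<Lb}" using gxz not_less by blast
  qed simp
  have finy: "finite {i. snd \<gamma> i \<noteq> 0}"
  proof (rule finite_subset[of _ "{..Kq}"])
    show "{i. snd \<gamma> i \<noteq> 0} \<subseteq> {..Kq}" using gyz not_le by blast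
  qed simp
  have bnn2: "0 \<le> \<beta> (Suc n - i)" if "1 \<le> i" "i \<le> Kq" for i
  proof -
    have "Suc n - i \<in> {1..n}" using that nb by auto
    thus ?thesis using bnn by blast
  qed
  have gH2p: "\<gamma> \<in> H2p"
    unfolding H2p_def H1p_def H1_def using finx finy gx0 bnn bnn2
    unfolding \<gamma>_def gx_def gy_def using nb by auto
  have wtg: "wt n \<gamma> = \<beta>"
  proof
    fix i
    show "wt n \<gamma> i = \<beta> i"
    proof (cases "i \<in> {1..n}")
      case False thus ?thesis using bout unfolding wt_def by auto
    next
      case True
      consider "i < Lb" | "Lb \<le> i \<and> i \<le> n - Kq" | "n - Kq < i" by arith
      thus ?thesis
      proof cases
        case 1 thus ?thesis using True nb unfolding wt_def \<gamma>_def gx_def gy_def by auto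
      next
        case 2 thus ?thesis using True nb bz[of i] unfolding wt_def \<gamma>_def gx_def gy_def by auto
      next
        case 3
        have "n + 1 - (n + 1 - i) = i" using True by auto
        thus ?thesis using True nb 3 unfolding wt_def \<gamma>_def gx_def gy_def by auto
      qed
    qed
  qed
  have s1: "sols d C n lam1 \<gamma> c" unfolding sols_def wtg using c(2) by simp
  have s2: "sols d C n \<gamma> lam2 c'" unfolding sols_def wtg using c'(2) by simp
  have Lbn: "Lb \<le> n" using nb by simp
  have cm: "c (Lb - 1) = c Lb" "c' (Lb - 1) = c' Lb"
    using flat[of "Lb - 1"] nb dLb by auto
  have xm1: "\<And>j. Lb \<le> j \<Longrightarrow> fst lam1 j = 0" using x1z unfolding Lb_def by auto
  have xm2: "\<And>j. Lb \<le> j \<Longrightarrow> fst lam2 j = 0" using x2z unfolding Lb_def by auto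
  have yn1: "\<And>j. n + 2 - Lb \<le> j \<Longrightarrow> snd lam1 j = 0" using y1z nb unfolding Kq_def by auto
  have yn2: "\<And>j. n + 2 - Lb \<le> j \<Longrightarrow> snd lam2 j = 0" using y2z nb unfolding Kq_def by auto
  have yng: "\<And>j. n + 2 - Lb \<le> j \<Longrightarrow> snd \<gamma> j = 0" using gyz nb by auto
  note I1 = sols_ins_iter[OF d1 dLb Lbn cm(1) xm1 gxz yn1 yng s1 c(1)]
  note I2 = sols_ins_iter[OF d1 dLb Lbn cm(2) gxz xm2 yng yn2 s2 c'(1)]
  have Q1: "\<forall>n'\<ge>n. Qge d C n' (wt n' lam1) (wt n' \<gamma>)"
  proof (intro allI impI)
    fix n' assume "n \<le> n'"
    then obtain k where "n' = n + k" using le_Suc_ex by blast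
    thus "Qge d C n' (wt n' lam1) (wt n' \<gamma>)" using I1[of k] unfolding Qge_sols by blast
  qed
  have Q2: "\<forall>n'\<ge>n. Qge d C n' (wt n' \<gamma>) (wt n' lam2)"
  proof (intro allI impI)
    fix n' assume "n \<le> n'"
    then obtain k where "n' = n + k" using le_Suc_ex by blast
    thus "Qge d C n' (wt n' \<gamma>) (wt n' lam2)" using I2[of k] unfolding Qge_sols by blast
  qed
  obtain c1 where c1: "sols d C (n + 1) lam1 \<gamma> c1" "c1 (n + 1) = c n" using I1[of 1] by blast
  have H1g: "fst \<gamma> \<in> H1" "snd \<gamma> \<in> H1" using gH2p unfolding H2p_def H1p_def by auto
  have sxg: "seqlen (fst \<gamma>) \<le> Lb - 1"
    by (rule seqlen_le[OF _ finx]) (use gxz in auto)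
  have syg: "seqlen (snd \<gamma>) \<le> Kq"
    by (rule seqlen_le[OF _ finy]) (use gyz in auto)
  have b1: "d \<le> Lb - 1" "seqlen (fst lam1) \<le> Lb - 1" "seqlen (snd lam1) \<le> Kq"
    unfolding Lb_def Kq_def P_def Q_def by auto
  define S where "S = (\<Sum>j\<in>{1..Kq}. snd lam1 j - snd \<gamma> j)"
  define H where "H = hnorm d C lam1 - hnorm d C \<gamma>"
  have e1: "Xdet d C n * c n = H + Xdet d C n * S"
    unfolding H_def S_def
    by (rule WI[OF d1 H1s(1,2) H1g b1(1,2) sxg b1(3) syg]) (use nb s1 dLb in \<open>auto simp: sols_def\<close>)
  have e2: "Xdet d C (n + 1) * c1 (n + 1) = H + Xdet d C (n + 1) * S"
    unfolding H_def S_def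
    by (rule WI[OF d1 H1s(1,2) H1g b1(1,2) sxg b1(3) syg]) (use nb c1(1) dLb in \<open>auto simp: sols_def\<close>)
  have st: "Xdet d C (Suc n) - Xdet d C n = Delta d C" by (rule Xdet_step) (use nb dLb in auto)
  have "Xdet d C (n + 1) * c n - Xdet d C n * c n = Xdet d C (n + 1) * S - Xdet d C n * S"
    using e1 e2 c1(2) by simp
  hence "(Xdet d C (Suc n) - Xdet d C n) * (c n - S) = 0" by (simp add: algebra_simps)
  hence "c n = S" using st Delta_ne by simp
  hence "H = 0" using e1 by simp
  hence hg: "hnorm d C \<gamma> = hnorm d C lam1" unfolding H_def by simp
  have "\<gamma> \<in> Ival d C lam1 lam2"
    unfolding Ival_def Hge_def using gH2p hg hn Q1 Q2 by auto
  thus ?thesis using wtg by force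
qed

lemma sup:
  assumes g: "\<gamma> \<in> Ival d C lam1 lam2"
  shows "\<exists>N. \<forall>n\<ge>N. wt n \<gamma> \<in> Ivaln d C n lam1 lam2"
proof -
  from g have gH: "\<gamma> \<in> H2p" and h1: "Hge d C lam1 \<gamma>" and h2: "Hge d C \<gamma> lam2"
    unfolding Ival_def by auto
  obtain Na where Na: "\<forall>n\<ge>Na. Qge d C n (wt n lam1) (wt n \<gamma>)" using h1 unfolding Hge_def by blast
  obtain Nb where Nb: "\<forall>n\<ge>Nb. Qge d C n (wt n \<gamma>) (wt n lam2)" using h2 unfolding Hge_def by blast
  have dom: "dominant n (wt n \<gamma>)" for n
    using gH unfolding dominant_def wt_def H2p_def H1p_def by (auto intro!: add_nonneg_nonneg)
  show ?thesis using Na Nb dom unfolding Ivaln_def by (intro exI[of _ "max Na Nb"]) auto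
qed

end

context L begin

lemma fin: "finite (Ival d C lam1 lam2)"
proof -
  define n0 where "n0 = N1"
  have n0b: "Lb + Kq \<le> n0" "NX \<le> n0" "N1 \<le> n0" unfolding n0_def N1_def by auto
  define R where "R k = (\<Sum>i\<in>{1..n0}. adjugate n0 (cartan_ext d C) k i * (wt n0 lam1 i - wt n0 lam2 i))" for k
  define Bd where "Bd = (\<Sum>k\<in>{1..n0}. \<bar>R k\<bar>)"
  define Fs where "Fs = {f :: nat \<Rightarrow> int. \<forall>k. (k \<in> {1..n0} \<longrightarrow> f k \<in> {0..Bd}) \<and> (k \<notin> {1..n0} \<longrightarrow> f k = 0)}"
  have finF: "finite Fs" unfolding Fs_def by (rule finite_set_of_finite_funs) auto
  define Phi where "Phi f = (\<lambda>i. if i \<in> {1..n0} then wt n0 lam1 i - Cc d C n0 f i else 0)" for f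
  define Rc where "Rc b = ((\<lambda>i. if 1 \<le> i \<and> i < Lb then b i else 0 :: int),
                         (\<lambda>j. if 1 \<le> j \<and> j \<le> Kq then b (n0 + 1 - j) else 0 :: int))" for b
  have "Ival d C lam1 lam2 \<subseteq> (\<lambda>f. Rc (Phi f)) ` Fs"
  proof
    fix \<gamma> assume g: "\<gamma> \<in> Ival d C lam1 lam2"
    from g have gH: "\<gamma> \<in> H2p" and h1: "Hge d C lam1 \<gamma>" and h2: "Hge d C \<gamma> lam2"
      unfolding Ival_def by auto
    have H1g: "fst \<gamma> \<in> H1" "snd \<gamma> \<in> H1" using gH unfolding H2p_def H1p_def by auto
    have gnn: "0 \<le> fst \<gamma> i" "0 \<le> snd \<gamma> i" for i using gH unfolding H2p_def H1p_def by auto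
    obtain Na where Na: "\<forall>n\<ge>Na. Qge d C n (wt n lam1) (wt n \<gamma>)" using h1 unfolding Hge_def by blast
    obtain Nb where Nb: "\<forall>n\<ge>Nb. Qge d C n (wt n \<gamma>) (wt n lam2)" using h2 unfolding Hge_def by blast
    define sx where "sx = seqlen (fst \<gamma>)"
    define sy where "sy = seqlen (snd \<gamma>)"
    define n where "n = n0 + Na + Nb + sx + sy + Lb + Kq"
    have nN1: "N1 \<le> n" using n0b unfolding n_def by simp
    obtain c where c: "\<forall>j. 0 \<le> c j" "sols d C n lam1 \<gamma> c"
      using Na[rule_format, of n] unfolding Qge_sols n_def by auto
    obtain c' where c': "\<forall>j. 0 \<le> c' j" "sols d C n \<gamma> lam2 c'"
      using Nb[rule_format, of n] unfolding Qge_sols n_def by auto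
    have bnn: "\<And>i. i \<in> {1..n} \<Longrightarrow> 0 \<le> wt n \<gamma> i"
      unfolding wt_def using gnn by (auto intro!: add_nonneg_nonneg)
    have c2: "\<And>i. i \<in> {1..n} \<Longrightarrow> Cc d C n c i = wt n lam1 i - wt n \<gamma> i" using c(2) unfolding sols_def by blast
    have c2': "\<And>i. i \<in> {1..n} \<Longrightarrow> Cc d C n c' i = wt n \<gamma> i - wt n lam2 i" using c'(2) unfolding sols_def by blast
    have flat: "c (Suc i) = c i \<and> c' (Suc i) = c' i" if "Lb - 1 \<le> i" "i \<le> n - Kq" for i
      using SL(1)[of n "wt n \<gamma>" c c' i, OF nN1 bnn c(1) c2 c'(1) c2'] that by blast
    have bz: "wt n \<gamma> i = 0" if "Lb \<le> i" "i \<le> n - Kq" for i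
      using SL(2)[of n "wt n \<gamma>" c c' i, OF nN1 bnn c(1) c2 c'(1) c2'] that by blast
    have gxz: "fst \<gamma> j = 0" if "Lb \<le> j" for j
    proof (cases "sx < j")
      case True thus ?thesis using seqlen_zero[OF H1g(1)] unfolding sx_def by blast
    next
      case False
      have "snd \<gamma> (n + 1 - j) = 0" by (rule seqlen_zero[OF H1g(2)]) (use False that in \<open>auto simp: n_def sy_def\<close>)
      moreover have "wt n \<gamma> j = 0" by (rule bz) (use False that in \<open>auto simp: n_def\<close>)
      moreover have "1 \<le> j" "j \<le> n" using False that dLb unfolding n_def by auto
      ultimately show ?thesis unfolding wt_def by simp
    qed
    have gyz: "snd \<gamma> j = 0" if "Kq < j" for j
    proof (cases "sy < j")
      case True thus ?thesis using seqlen_zero[OF H1g(2)] unfolding sy_def by blast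
    next
      case False
      have "fst \<gamma> (n + 1 - j) = 0" by (rule seqlen_zero[OF H1g(1)]) (use False that in \<open>auto simp: n_def sx_def\<close>)
      moreover have "wt n \<gamma> (n + 1 - j) = 0" by (rule bz) (use False that in \<open>auto simp: n_def\<close>)
      moreover have "n + 1 - (n + 1 - j) = j" "1 \<le> n + 1 - j" "n + 1 - j \<le> n" using False that unfolding n_def by auto
      ultimately show ?thesis unfolding wt_def by simp
    qed
    have Lbn0: "Lb \<le> n0" using n0b by simp
    have xm1: "\<And>j. Lb \<le> j \<Longrightarrow> fst lam1 j = 0" using x1z unfolding Lb_def by auto
    have xm2: "\<And>j. Lb \<le> j \<Longrightarrow> fst lam2 j = 0" using x2z unfolding Lb_def by auto
    have yn1: "\<And>j. n0 + 2 - Lb \<le> j \<Longrightarrow> snd lam1 j = 0" using y1z n0b unfolding Kq_def by auto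
    have yn2: "\<And>j. n0 + 2 - Lb \<le> j \<Longrightarrow> snd lam2 j = 0" using y2z n0b unfolding Kq_def by auto
    have yng: "\<And>j. n0 + 2 - Lb \<le> j \<Longrightarrow> snd \<gamma> j = 0" using gyz n0b by auto
    have nk: "n = n0 + (n - n0)" unfolding n_def by simp
    have win: "\<forall>i. Lb - 1 \<le> i \<longrightarrow> i < Lb + (n - n0) \<longrightarrow> c i = c (Suc i) \<and> c' i = c' (Suc i)"
    proof (intro allI impI)
      fix i assume "Lb - 1 \<le> i" "i < Lb + (n - n0)"
      moreover have "i \<le> n - Kq" using calculation n0b unfolding n_def by auto
      ultimately show "c i = c (Suc i) \<and> c' i = c' (Suc i)" using flat[of i] by simp
    qed
    have cn: "sols d C (n0 + (n - n0)) lam1 \<gamma> c" "sols d C (n0 + (n - n0)) \<gamma> lam2 c'"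
      using c(2) c'(2) nk by simp_all
    have w1: "\<forall>i. Lb - 1 \<le> i \<longrightarrow> i < Lb + (n - n0) \<longrightarrow> c i = c (Suc i)" using win by blast
    have w2: "\<forall>i. Lb - 1 \<le> i \<longrightarrow> i < Lb + (n - n0) \<longrightarrow> c' i = c' (Suc i)" using win by blast
    obtain c0 where c0: "sols d C n0 lam1 \<gamma> c0" "\<forall>j. 0 \<le> c0 j"
      using sols_del_iter[where C = C and k = "n - n0" and c = c, OF d1 dLb Lbn0 xm1 gxz yn1 yng cn(1) c(1) w1] by blast
    obtain c0' where c0': "sols d C n0 \<gamma> lam2 c0'" "\<forall>j. 0 \<le> c0' j"
      using sols_del_iter[where C = C and k = "n - n0" and c = c', OF d1 dLb Lbn0 gxz xm2 yng yn2 cn(2) c'(1) w2] by blast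
    define e0 where "e0 j = c0 j + c0' j" for j
    have esol: "Cc d C n0 e0 i = wt n0 lam1 i - wt n0 lam2 i" if "i \<in> {1..n0}" for i
      using Cc_add[of d C n0 c0 c0' i] c0(1) c0'(1) that unfolding e0_def sols_def by auto
    have ebnd: "c0 k \<le> Bd" if k: "k \<in> {1..n0}" for k
    proof -
      have "Xdet d C n0 * e0 k = R k"
        unfolding R_def using adj_solve[of k n0 d C e0] k esol by (simp add: esol)
      hence Rk: "\<bar>R k\<bar> = \<bar>Xdet d C n0\<bar> * \<bar>e0 k\<bar>" by (metis abs_mult)
      have "Xdet d C n0 \<noteq> 0" by (rule Xdet_ne) (use n0b in simp)
      hence "1 \<le> \<bar>Xdet d C n0\<bar>" by linarith
      hence "1 * \<bar>e0 k\<bar> \<le> \<bar>Xdet d C n0\<bar> * \<bar>e0 k\<bar>" by (intro mult_right_mono) auto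
      hence "\<bar>e0 k\<bar> \<le> \<bar>R k\<bar>" using Rk by simp
      moreover have "\<bar>R k\<bar> \<le> Bd" unfolding Bd_def
        by (rule member_le_sum) (use k in auto)
      moreover have "c0 k \<le> e0 k" using c0'(2) unfolding e0_def by simp
      ultimately show ?thesis by simp
    qed
    define f where "f k = (if k \<in> {1..n0} then c0 k else 0)" for k
    have fF: "f \<in> Fs" unfolding Fs_def f_def using ebnd c0(2) by auto
    have Pf: "Phi f = wt n0 \<gamma>"
    proof
      fix i
      show "Phi f i = wt n0 \<gamma> i"
      proof (cases "i \<in> {1..n0}")
        case True
        have "Cc d C n0 f i = Cc d C n0 c0 i" by (rule Cc_cong) (simp add: f_def)
        thus ?thesis using True c0(1) unfolding Phi_def sols_def by simp
      next
        case False thus ?thesis unfolding Phi_def wt_def by auto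
      qed
    qed
    have "Rc (wt n0 \<gamma>) = \<gamma>"
    proof (rule prod_eqI)
      show "fst (Rc (wt n0 \<gamma>)) = fst \<gamma>"
      proof
        fix i
        show "fst (Rc (wt n0 \<gamma>)) i = fst \<gamma> i"
        proof (cases "1 \<le> i \<and> i < Lb")
          case True
          have "snd \<gamma> (n0 + 1 - i) = 0" by (rule gyz) (use True n0b in auto)
          thus ?thesis using True n0b unfolding Rc_def wt_def by auto
        next
          case False
          hence "i = 0 \<or> Lb \<le> i" by auto
          thus ?thesis using gxz H1_zero0[OF H1g(1)] False unfolding Rc_def by auto
        qed
      qed
      show "snd (Rc (wt n0 \<gamma>)) = snd \<gamma>"
      proof
        fix j
        show "snd (Rc (wt n0 \<gamma>)) j = snd \<gamma> j"
        proof (cases "1 \<le> j \<and> j \<le> Kq")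
          case True
          have "fst \<gamma> (n0 + 1 - j) = 0" by (rule gxz) (use True n0b in auto)
          moreover have "n0 + 1 - (n0 + 1 - j) = j" "1 \<le> n0 + 1 - j" "n0 + 1 - j \<le> n0" using True n0b by auto
          ultimately show ?thesis using True unfolding Rc_def wt_def by auto
        next
          case False
          hence "j = 0 \<or> Kq < j" by auto
          thus ?thesis using gyz H1_zero0[OF H1g(2)] False unfolding Rc_def by auto
        qed
      qed
    qed
    thus "\<gamma> \<in> (\<lambda>f. Rc (Phi f)) ` Fs" using fF Pf by force
  qed
  thus ?thesis using finF finite_subset by blast
qed

end

theorem lemma5p1:
  fixes d :: nat and C :: "nat \<Rightarrow> nat \<Rightarrow> int"
    and lam1 lam2 :: "(nat \<Rightarrow> int) \<times> (nat \<Rightarrow> int)"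
  assumes "d \<ge> 1" and "gcm d C" and "symmetrizable d C" and "extensible d C"
    and "lam1 \<in> H2p" and "lam2 \<in> H2p" and "Hge d C lam1 lam2"
  shows "finite (Ival d C lam1 lam2)
    \<and> (\<exists>N. \<forall>n\<ge>N. Ivaln d C n lam1 lam2 = (\<lambda>g. wt n g) ` Ival d C lam1 lam2)"
proof -
  interpret I: L d C lam1 lam2
    by unfold_locales (use assms in auto)
  have F: "finite (Ival d C lam1 lam2)" by (rule I.fin)
  define Ng where "Ng g = (SOME N. \<forall>n\<ge>N. wt n g \<in> Ivaln d C n lam1 lam2)" for g
  have Ng: "wt n g \<in> Ivaln d C n lam1 lam2" if "g \<in> Ival d C lam1 lam2" "Ng g \<le> n" for g n
  proof -
    have "\<forall>n\<ge>Ng g. wt n g \<in> Ivaln d C n lam1 lam2"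
      unfolding Ng_def by (rule someI_ex[OF I.sup[OF that(1)]])
    thus ?thesis using that(2) by blast
  qed
  define N where "N = max I.N1 (Max (Ng ` Ival d C lam1 lam2))"
  have "\<forall>n\<ge>N. Ivaln d C n lam1 lam2 = (\<lambda>g. wt n g) ` Ival d C lam1 lam2"
  proof (intro allI impI)
    fix n assume n: "N \<le> n"
    show "Ivaln d C n lam1 lam2 = (\<lambda>g. wt n g) ` Ival d C lam1 lam2"
    proof
      show "Ivaln d C n lam1 lam2 \<subseteq> (\<lambda>g. wt n g) ` Ival d C lam1 lam2"
        using I.sub[of n] n unfolding N_def by auto
    next
      show "(\<lambda>g. wt n g) ` Ival d C lam1 lam2 \<subseteq> Ivaln d C n lam1 lam2"
      proof
        fix b assume "b \<in> (\<lambda>g. wt n g) ` Ival d C lam1 lam2"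
        then obtain g where g: "g \<in> Ival d C lam1 lam2" "b = wt n g" by blast
        have "Ng g \<le> Max (Ng ` Ival d C lam1 lam2)" using F g(1) by (intro Max_ge) auto
        hence "Ng g \<le> n" using n unfolding N_def by simp
        thus "b \<in> Ivaln d C n lam1 lam2" using Ng[OF g(1)] g(2) by simp
      qed
    qed
  qed
  thus ?thesis using F by blast
qed

end
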